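(* Let $G$ be a group and $S\subset G$ a finite generating set with $S\cap S^{-1}=\emptyset$. Let $$R=\{a\cdot b\cdot c\mid a,b,c\in S,\ abc=e \text{ in } G\}\cup\{a\cdot b\cdot c^{-1}\mid a,b,c\in S,\ abc^{-1}=e\text{ in } G\}.$$ Then $Flag(G,S)$ is a simply connected simplicial complex (with $\pi_1(Flag(G,S)/G)=G$) if and only if $\langle S\mid R\rangle$ is a presentation of $G$.
   Context: For a group $G$ and a finite generating set $S\subset G$ with $S\cap S^{-1}=\emptyset$ (in particular $e\notin S$ and $s^2\neq e$ for $s\in S$), the Cayley graph $\Gamma(G,S)$ has vertex set $\{v[g]\mid g\in G\}$ and, for each $g\in G$, $s\in S$, a directed edge $e[g,s]$ from $v[g]$ to $v[gs]$; since $S\cap S^{-1}=\emptyset$ the underlying undirected graph is simple. $Flag(G,S)$ denotes the flag complex of $\Gamma(G,S)$: the simplicial complex having a simplex for every finite set of pairwise adjacent vertices. $G$ acts on $Flag(G,S)$ by left multiplication, properly discontinuously and cocompactly. *)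

theory Defs
  imports "HOL-Analysis.Analysis" "HOL-Algebra.Generated_Groups"
begin

definition cayley_adj :: "('a, 'b) monoid_scheme \<Rightarrow> 'a set \<Rightarrow> 'a \<Rightarrow> 'a \<Rightarrow> bool" where
  "cayley_adj G S g h \<longleftrightarrow> g \<in> carrier G \<and> h \<in> carrier G \<and> g \<noteq> h \<and>
     (inv\<^bsub>G\<^esub> g \<otimes>\<^bsub>G\<^esub> h \<in> S \<or> inv\<^bsub>G\<^esub> h \<otimes>\<^bsub>G\<^esub> g \<in> S)"

definition flag_simplex :: "('a, 'b) monoid_scheme \<Rightarrow> 'a set \<Rightarrow> 'a set \<Rightarrow> bool" where
  "flag_simplex G S \<sigma> \<longleftrightarrow> finite \<sigma> \<and> \<sigma> \<noteq> {} \<and> \<sigma> \<subseteq> carrier G \<and>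
     (\<forall>g\<in>\<sigma>. \<forall>h\<in>\<sigma>. g \<noteq> h \<longrightarrow> cayley_adj G S g h)"

text \<open>Geometric realization of Flag(G,S) in barycentric coordinates: functions
  carrier G \<rightarrow> [0,1], zero outside a simplex, summing to 1.  As a subset of the
  type 'a => real it carries the product topology.\<close>
definition flag_realization :: "('a, 'b) monoid_scheme \<Rightarrow> 'a set \<Rightarrow> ('a \<Rightarrow> real) set" where
  "flag_realization G S = {f. \<exists>\<sigma>. flag_simplex G S \<sigma> \<and> (\<forall>v. v \<notin> \<sigma> \<longrightarrow> f v = 0) \<and>
      (\<forall>v. 0 \<le> f v) \<and> sum f \<sigma> = 1}"

text \<open>A letter (s, b) stands for s if b = False and for s^{-1} if b = True.\<close>
type_synonym 'a word = "('a \<times> bool) list"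

definition inv_letter :: "'a \<times> bool \<Rightarrow> 'a \<times> bool" where
  "inv_letter x = (fst x, \<not> snd x)"

definition inv_word :: "'a word \<Rightarrow> 'a word" where
  "inv_word w = rev (map inv_letter w)"

definition word_eval :: "('a, 'b) monoid_scheme \<Rightarrow> 'a word \<Rightarrow> 'a" where
  "word_eval G w = foldr (\<lambda>x acc. (if snd x then inv\<^bsub>G\<^esub> (fst x) else fst x) \<otimes>\<^bsub>G\<^esub> acc) w \<one>\<^bsub>G\<^esub>"

definition word_over :: "'a set \<Rightarrow> 'a word \<Rightarrow> bool" where
  "word_over S w \<longleftrightarrow> fst ` set w \<subseteq> S"

definition free_red :: "'a word \<Rightarrow> 'a word \<Rightarrow> bool" where
  "free_red u v \<longleftrightarrow> (\<exists>p q x. u = p @ [x, inv_letter x] @ q \<and> v = p @ q)"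

definition free_eq :: "'a word \<Rightarrow> 'a word \<Rightarrow> bool" where
  "free_eq = (\<lambda>u v. free_red u v \<or> free_red v u)\<^sup>*\<^sup>*"

text \<open>w lies in the normal closure of the relators R in the free group on S:
  w is freely equal to a product of conjugates u r^{\<plusminus>1} u^{-1}.\<close>
definition in_normal_closure :: "'a set \<Rightarrow> 'a word set \<Rightarrow> 'a word \<Rightarrow> bool" where
  "in_normal_closure S R w \<longleftrightarrow>
     (\<exists>L :: ('a word \<times> 'a word \<times> bool) list.
        (\<forall>(u, r, e) \<in> set L. word_over S u \<and> r \<in> R) \<and>
        free_eq w (concat (map (\<lambda>(u, r, e). u @ (if e then inv_word r else r) @ inv_word u) L)))"

definition is_presentation :: "('a, 'b) monoid_scheme \<Rightarrow> 'a set \<Rightarrow> 'a word set \<Rightarrow> bool" where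
  "is_presentation G S R \<longleftrightarrow>
     (\<forall>g\<in>carrier G. \<exists>w. word_over S w \<and> word_eval G w = g) \<and>
     (\<forall>w. word_over S w \<longrightarrow> (word_eval G w = \<one>\<^bsub>G\<^esub> \<longleftrightarrow> in_normal_closure S R w))"

definition triangle_relators :: "('a, 'b) monoid_scheme \<Rightarrow> 'a set \<Rightarrow> 'a word set" where
  "triangle_relators G S =
     {[(a, False), (b, False), (c, False)] | a b c.
         a \<in> S \<and> b \<in> S \<and> c \<in> S \<and> a \<otimes>\<^bsub>G\<^esub> b \<otimes>\<^bsub>G\<^esub> c = \<one>\<^bsub>G\<^esub>} \<union>
     {[(a, False), (b, False), (c, True)] | a b c.
         a \<in> S \<and> b \<in> S \<and> c \<in> S \<and> a \<otimes>\<^bsub>G\<^esub> b \<otimes>\<^bsub>G\<^esub> inv\<^bsub>G\<^esub> c = \<one>\<^bsub>G\<^esub>}"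

end

theory Submission
  imports Defs
begin


definition supp :: "('a \<Rightarrow> real) \<Rightarrow> 'a set" where
  "supp f = {v. f v \<noteq> 0}"

definition dl :: "'a \<Rightarrow> 'a \<Rightarrow> real" where
  "dl a = (\<lambda>v. if v = a then 1 else 0)"

definition comb :: "real \<Rightarrow> ('a \<Rightarrow> real) \<Rightarrow> ('a \<Rightarrow> real) \<Rightarrow> ('a \<Rightarrow> real)" where
  "comb s f g = (\<lambda>v. (1 - s) * f v + s * g v)"

definition seg :: "'a \<Rightarrow> 'a \<Rightarrow> real \<Rightarrow> ('a \<Rightarrow> real)" where
  "seg a b s = comb s (dl a) (dl b)"

definition cl :: "real \<Rightarrow> real" where
  "cl s = max 0 (min 1 s)"

definition sg :: "'a \<Rightarrow> 'a \<Rightarrow> real \<Rightarrow> ('a \<Rightarrow> real)" where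
  "sg a b s = seg a b (cl s)"

lemma comb_0[simp]: "comb 0 f g = f" and comb_1[simp]: "comb 1 f g = g"
  and comb_same[simp]: "comb s f f = f"
  by (auto simp: comb_def algebra_simps)

lemma seg_0[simp]: "seg a b 0 = dl a" and seg_1[simp]: "seg a b 1 = dl b"
  and seg_same[simp]: "seg a a s = dl a"
  by (auto simp: seg_def)

lemma supp_dl[simp]: "supp (dl a) = {a}"
  by (auto simp: supp_def dl_def)

lemma supp_comb: "supp (comb s f g) \<subseteq> supp f \<union> supp g"
  by (auto simp: supp_def comb_def)

lemma supp_seg: "supp (seg a b s) \<subseteq> {a, b}"
  using supp_comb[of s "dl a" "dl b"] by (auto simp: seg_def)

lemma cl_range: "0 \<le> cl s" "cl s \<le> 1" by (auto simp: cl_def)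
lemma cl_id[simp]: "0 \<le> s \<Longrightarrow> s \<le> 1 \<Longrightarrow> cl s = s" by (auto simp: cl_def)
lemma cont_cl: "continuous_on A cl"
  unfolding cl_def by (intro continuous_intros)

lemma cont_coord_on: "continuous_on A p \<Longrightarrow> continuous_on A (\<lambda>t. p t v)"
  by (rule continuous_on_product_then_coordinatewise)

lemma cont_seg: "continuous_on A (seg a b)"
  unfolding seg_def comb_def
  by (intro continuous_on_coordinatewise_then_product continuous_intros)

lemma cont_sg: "continuous_on A (sg a b)"
proof -
  have "continuous_on A (seg a b \<circ> cl)"
    by (rule continuous_on_compose[OF cont_cl]) (rule cont_seg)
  then show ?thesis by (simp add: sg_def o_def)
qed

definition ea :: "('a, 'b) monoid_scheme \<Rightarrow> 'a set \<Rightarrow> 'a \<Rightarrow> 'a \<Rightarrow> bool" where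
  "ea G S g h \<longleftrightarrow> g \<in> carrier G \<and> h \<in> carrier G \<and> (g = h \<or> cayley_adj G S g h)"

definition tri :: "('a, 'b) monoid_scheme \<Rightarrow> 'a set \<Rightarrow> 'a \<Rightarrow> 'a \<Rightarrow> 'a \<Rightarrow> bool" where
  "tri G S a b c \<longleftrightarrow> ea G S a b \<and> ea G S b c \<and> ea G S a c"

lemma cayley_adj_sym: "cayley_adj G S g h \<Longrightarrow> cayley_adj G S h g"
  by (auto simp: cayley_adj_def)

lemma ea_sym: "ea G S g h \<Longrightarrow> ea G S h g"
  by (auto simp: ea_def cayley_adj_sym)

lemma ea_refl: "g \<in> carrier G \<Longrightarrow> ea G S g g"
  by (auto simp: ea_def)

lemma flag_simplex_iff: "flag_simplex G S \<sigma> \<longleftrightarrow> finite \<sigma> \<and> \<sigma> \<noteq> {} \<and> (\<forall>g\<in>\<sigma>. \<forall>h\<in>\<sigma>. ea G S g h)"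
  by (auto simp: flag_simplex_def ea_def cayley_adj_def)

lemma flag_simplex_subset: "flag_simplex G S \<sigma> \<Longrightarrow> \<tau> \<subseteq> \<sigma> \<Longrightarrow> \<tau> \<noteq> {} \<Longrightarrow> flag_simplex G S \<tau>"
  by (auto simp: flag_simplex_iff intro: finite_subset)

lemma ea_carrier: "ea G S g h \<Longrightarrow> g \<in> carrier G" "ea G S g h \<Longrightarrow> h \<in> carrier G"
  by (auto simp: ea_def)

lemma flag_simplex_tri: "tri G S a b c \<Longrightarrow> flag_simplex G S {a, b, c}"
  unfolding flag_simplex_iff tri_def
  by (auto intro: ea_sym ea_refl dest: ea_carrier)

lemma flag_simplex_ea: "ea G S a b \<Longrightarrow> flag_simplex G S {a, b}"
  unfolding flag_simplex_iff
  by (auto intro: ea_sym ea_refl dest: ea_carrier)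

lemma realization_D:
  assumes "f \<in> flag_realization G S"
  shows "(\<forall>v. 0 \<le> f v) \<and> flag_simplex G S (supp f) \<and> sum f (supp f) = 1"
proof -
  obtain \<sigma> where s: "flag_simplex G S \<sigma>" "\<forall>v. v \<notin> \<sigma> \<longrightarrow> f v = 0" "\<forall>v. 0 \<le> f v" "sum f \<sigma> = 1"
    using assms by (auto simp: flag_realization_def)
  have sub: "supp f \<subseteq> \<sigma>" using s(2) by (auto simp: supp_def)
  have fin: "finite \<sigma>" using s(1) by (simp add: flag_simplex_def)
  have "sum f (supp f) = sum f \<sigma>"
    by (rule sum.mono_neutral_left[OF fin sub]) (auto simp: supp_def)
  then have 1: "sum f (supp f) = 1" using s by simp
  then have "supp f \<noteq> {}" by auto
  then have "flag_simplex G S (supp f)" by (rule flag_simplex_subset[OF s(1) sub])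
  then show ?thesis using s(3) 1 by blast
qed

lemma realization_I:
  assumes "\<forall>v. 0 \<le> f v" "flag_simplex G S \<sigma>" "supp f \<subseteq> \<sigma>" "sum f \<sigma> = 1"
  shows "f \<in> flag_realization G S"
  using assms unfolding flag_realization_def supp_def by blast

lemma realization_ea:
  "f \<in> flag_realization G S \<Longrightarrow> a \<in> supp f \<Longrightarrow> b \<in> supp f \<Longrightarrow> ea G S a b"
  using realization_D[of f G S] by (auto simp: flag_simplex_iff)

lemma realization_supp_ne: "f \<in> flag_realization G S \<Longrightarrow> supp f \<noteq> {}"
  using realization_D[of f G S] by (auto simp: flag_simplex_iff)

lemma comb_in:
  assumes "f \<in> flag_realization G S" "g \<in> flag_realization G S" "0 \<le> s" "s \<le> 1"
    and "flag_simplex G S (supp f \<union> supp g)"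
  shows "comb s f g \<in> flag_realization G S"
proof -
  let ?\<sigma> = "supp f \<union> supp g"
  have fin: "finite ?\<sigma>" using assms(5) by (simp add: flag_simplex_def)
  have f: "(\<forall>v. 0 \<le> f v) \<and> sum f (supp f) = 1" and g: "(\<forall>v. 0 \<le> g v) \<and> sum g (supp g) = 1"
    using realization_D[OF assms(1)] realization_D[OF assms(2)] by auto
  have "sum f (supp f) = sum f ?\<sigma>"
    by (rule sum.mono_neutral_left[OF fin]) (auto simp: supp_def)
  then have sf: "sum f ?\<sigma> = 1" using f by simp
  have "sum g (supp g) = sum g ?\<sigma>"
    by (rule sum.mono_neutral_left[OF fin]) (auto simp: supp_def)
  then have sg: "sum g ?\<sigma> = 1" using g by simp
  show ?thesis
  proof (rule realization_I[OF _ assms(5)])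
    show "\<forall>v. 0 \<le> comb s f g v" using f g assms(3,4) by (auto simp: comb_def)
    show "supp (comb s f g) \<subseteq> ?\<sigma>" by (rule supp_comb)
    show "sum (comb s f g) ?\<sigma> = 1"
      using sf sg by (simp add: comb_def sum.distrib sum_distrib_left[symmetric])
  qed
qed

lemma dl_in: "a \<in> carrier G \<Longrightarrow> dl a \<in> flag_realization G S"
  by (rule realization_I[of _ G S "{a}"]) (auto simp: flag_simplex_iff ea_refl dl_def supp_def)

lemma seg_in: "ea G S a b \<Longrightarrow> 0 \<le> s \<Longrightarrow> s \<le> 1 \<Longrightarrow> seg a b s \<in> flag_realization G S"
  unfolding seg_def
proof (rule comb_in)
  assume "ea G S a b"
  then show "dl a \<in> flag_realization G S" "dl b \<in> flag_realization G S"
    "flag_simplex G S (supp (dl a) \<union> supp (dl b))"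
    using flag_simplex_ea[of G S a b] by (auto intro: dl_in dest: ea_carrier simp: insert_commute)
qed

lemma sg_in: "ea G S a b \<Longrightarrow> sg a b s \<in> flag_realization G S"
  unfolding sg_def using cl_range by (intro seg_in) auto

lemma cl_le0[simp]: "s \<le> 0 \<Longrightarrow> cl s = 0" by (auto simp: cl_def)
lemma cl_ge1[simp]: "1 \<le> s \<Longrightarrow> cl s = 1" by (auto simp: cl_def)

section \<open>Straight-line homotopies\<close>

lemma cont_sq_coord:
  assumes "path p"
  shows "continuous_on ({0..1}\<times>{0..1}) (\<lambda>x. p (snd x) v)"
proof -
  have "continuous_on {0..1} (\<lambda>t. p t v)" using assms unfolding path_def by (rule cont_coord_on)
  then show ?thesis
    by (rule continuous_on_compose2) (auto intro!: continuous_intros)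
qed

lemma SL_hom:
  assumes "path p" "path q" "path_image p \<subseteq> flag_realization G S" "path_image q \<subseteq> flag_realization G S"
    and "\<And>t. t \<in> {0..1} \<Longrightarrow> flag_simplex G S (supp (p t) \<union> supp (q t))"
  shows "continuous_on ({0..1}\<times>{0..1}) (\<lambda>y. comb (fst y) (p (snd y)) (q (snd y)))"
    and "(\<lambda>y. comb (fst y) (p (snd y)) (q (snd y))) \<in> ({0..1}\<times>{0..1}) \<rightarrow> flag_realization G S"
proof -
  show "continuous_on ({0..1}\<times>{0..1}) (\<lambda>y. comb (fst y) (p (snd y)) (q (snd y)))"
    unfolding comb_def
  proof (rule continuous_on_coordinatewise_then_product)
    fix v
    have cp: "continuous_on ({0..1}\<times>{0..1}) (\<lambda>x. p (snd x) v)" by (rule cont_sq_coord[OF assms(1)])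
    have cq: "continuous_on ({0..1}\<times>{0..1}) (\<lambda>x. q (snd x) v)" by (rule cont_sq_coord[OF assms(2)])
    show "continuous_on ({0..1}\<times>{0..1}) (\<lambda>y. (1 - fst y) * p (snd y) v + fst y * q (snd y) v)"
      by (intro continuous_intros cp cq)
  qed
  show "(\<lambda>y. comb (fst y) (p (snd y)) (q (snd y))) \<in> ({0..1}\<times>{0..1}) \<rightarrow> flag_realization G S"
  proof
    fix y :: "real \<times> real" assume y: "y \<in> {0..1}\<times>{0..1}"
    then have "p (snd y) \<in> flag_realization G S" "q (snd y) \<in> flag_realization G S"
      using assms(3,4) by (auto simp: path_image_def)
    then show "comb (fst y) (p (snd y)) (q (snd y)) \<in> flag_realization G S"
      using y assms(5)[of "snd y"] by (intro comb_in) auto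
  qed
qed

lemma SL_paths:
  assumes "path p" "path q" "path_image p \<subseteq> flag_realization G S" "path_image q \<subseteq> flag_realization G S"
    and "pathstart q = pathstart p" "pathfinish q = pathfinish p"
    and "\<And>t. t \<in> {0..1} \<Longrightarrow> flag_simplex G S (supp (p t) \<union> supp (q t))"
  shows "homotopic_paths (flag_realization G S) p q"
  unfolding homotopic_paths
proof (intro exI[of _ "\<lambda>y. comb (fst y) (p (snd y)) (q (snd y))"] conjI)
  note h = SL_hom[OF assms(1-4) assms(7)]
  show "continuous_on ({0..1}\<times>{0..1}) (\<lambda>y. comb (fst y) (p (snd y)) (q (snd y)))" by (rule h(1))
  show "(\<lambda>y. comb (fst y) (p (snd y)) (q (snd y))) \<in> ({0..1}\<times>{0..1}) \<rightarrow> flag_realization G S" by (rule h(2))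
qed (use assms(5,6) in \<open>auto simp: pathstart_def pathfinish_def\<close>)

lemma SL_loops:
  assumes "path p" "path q" "path_image p \<subseteq> flag_realization G S" "path_image q \<subseteq> flag_realization G S"
    and "pathfinish p = pathstart p" "pathfinish q = pathstart q"
    and "\<And>t. t \<in> {0..1} \<Longrightarrow> flag_simplex G S (supp (p t) \<union> supp (q t))"
  shows "homotopic_loops (flag_realization G S) p q"
  unfolding homotopic_loops
proof (intro exI[of _ "\<lambda>y. comb (fst y) (p (snd y)) (q (snd y))"] conjI)
  note h = SL_hom[OF assms(1-4) assms(7)]
  show "continuous_on ({0..1}\<times>{0..1}) (\<lambda>y. comb (fst y) (p (snd y)) (q (snd y)))" by (rule h(1))
  show "(\<lambda>y. comb (fst y) (p (snd y)) (q (snd y))) \<in> ({0..1}\<times>{0..1}) \<rightarrow> flag_realization G S" by (rule h(2))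
qed (use assms(5,6) in \<open>auto simp: pathstart_def pathfinish_def\<close>)

section \<open>Edge paths\<close>

fun epath :: "'a list \<Rightarrow> real \<Rightarrow> ('a \<Rightarrow> real)" where
  "epath [] t = (\<lambda>v. 0)"
| "epath [a] t = dl a"
| "epath (a # b # L) t = (if t * real (Suc (length L)) \<le> 1 then sg a b (t * real (Suc (length L)))
       else epath (b # L) ((t * real (Suc (length L)) - 1) / real (length L)))"

lemma epath_start: "L \<noteq> [] \<Longrightarrow> t \<le> 0 \<Longrightarrow> epath L t = dl (hd L)"
proof (induction L t rule: epath.induct)
  case (3 a b L t)
  have "t * real (Suc (length L)) \<le> 0" using 3(3) by (simp add: mult_nonpos_nonneg)
  then show ?case by (simp add: sg_def)
qed auto

lemma epath_end: "L \<noteq> [] \<Longrightarrow> 1 \<le> t \<Longrightarrow> epath L t = dl (last L)"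
proof (induction L t rule: epath.induct)
  case (3 a b L t)
  let ?m = "real (Suc (length L))"
  have tm: "?m \<le> t * ?m" using 3(3) by simp
  show ?case
  proof (cases "t * ?m \<le> 1")
    case True
    have "?m \<le> 1" using True tm by linarith
    then have L0: "L = []" by simp
    have "1 \<le> t * ?m" using 3(3) L0 by simp
    then have "t * ?m = 1" using True by linarith
    then show ?thesis using True L0 by (simp add: sg_def)
  next
    case False
    show ?thesis
    proof (cases "L = []")
      case True then show ?thesis using False by simp
    next
      case nL: False
      have "1 \<le> (t * ?m - 1) / real (length L)"
        using tm nL by (simp add: field_simps)
      then have "epath (b # L) ((t * ?m - 1) / real (length L)) = dl (last (b # L))"
        using 3(1)[OF False] by simp
      then show ?thesis using False by simp
    qed
  qed
qed auto

lemma epath_cont: "continuous_on UNIV (epath L)"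
proof (induction L rule: induct_list012)
  case 1 then show ?case by (simp add: continuous_on_const)
next
  case (2 a) then show ?case by (simp add: continuous_on_const)
next
  case (3 a b L)
  let ?m = "real (Suc (length L))"
  have eq: "epath (a # b # L) = (\<lambda>t. if t * ?m \<le> 1 then sg a b (t * ?m)
       else epath (b # L) ((t * ?m - 1) / real (length L)))"
    by (rule ext) simp
  have "continuous_on UNIV (\<lambda>t. if t * ?m \<le> 1 then sg a b (t * ?m)
       else epath (b # L) ((t * ?m - 1) / real (length L)))"
  proof (rule continuous_on_cases_le)
    show "continuous_on {t \<in> UNIV. t * ?m \<le> 1} (\<lambda>t. sg a b (t * ?m))"
      by (rule continuous_on_compose2[OF cont_sg[of UNIV]]) (auto intro!: continuous_intros)
    have ci: "continuous_on {t \<in> UNIV. 1 \<le> t * ?m} (\<lambda>t. (t * ?m - 1) * inverse (real (length L)))"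
      by (intro continuous_intros)
    show "continuous_on {t \<in> UNIV. 1 \<le> t * ?m} (\<lambda>t. epath (b # L) ((t * ?m - 1) / real (length L)))"
      using continuous_on_compose2[OF 3(2) ci] by (simp add: divide_inverse)
    show "continuous_on UNIV (\<lambda>t. t * ?m)" by (intro continuous_intros)
    fix t assume "t * ?m = 1"
    then show "sg a b (t * ?m) = epath (b # L) ((t * ?m - 1) / real (length L))"
      by (simp add: sg_def epath_start)
  qed
  then show ?case using eq by simp
qed

lemma path_epath: "path (epath L)"
  unfolding path_def using epath_cont continuous_on_subset by blast

lemma block_exists:
  assumes "0 \<le> x" "x \<le> real m" "0 < m"
  shows "\<exists>j<m. real j \<le> x \<and> x \<le> real j + 1"
proof (cases "x = real m")
  case True
  then show ?thesis using assms by (intro exI[of _ "m - 1"]) auto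
next
  case False
  then have xl: "x < real m" using assms by simp
  let ?j = "nat \<lfloor>x\<rfloor>"
  have "real ?j \<le> x" using assms(1) by linarith
  moreover have "x \<le> real ?j + 1" using assms(1) by linarith
  moreover have "?j < m" using xl assms(1) by linarith
  ultimately show ?thesis by blast
qed

lemma epath_seg:
  "j < length L - 1 \<Longrightarrow> real j \<le> t * real (length L - 1) \<Longrightarrow> t * real (length L - 1) \<le> real j + 1
   \<Longrightarrow> \<exists>s. 0 \<le> s \<and> s \<le> 1 \<and> epath L t = seg (L!j) (L!Suc j) s"
proof (induction L t arbitrary: j rule: epath.induct)
  case (3 a b L t)
  let ?m = "real (Suc (length L))"
  have hm: "real j \<le> t * ?m" "t * ?m \<le> real j + 1" using 3(3,4) by simp_all
  show ?case
  proof (cases j)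
    case 0
    then have le: "t * ?m \<le> 1" using hm by simp
    show ?thesis using le 0 cl_range[of "t * ?m"]
      by (intro exI[of _ "cl (t * ?m)"]) (simp add: sg_def)
  next
    case (Suc j')
    show ?thesis
    proof (cases "t * ?m \<le> 1")
      case True
      then have tm1: "t * ?m = 1" using hm Suc by simp
      then have j0: "j' = 0" using hm Suc by simp
      moreover have "L \<noteq> []" using 3(2) Suc by (cases L) auto
      ultimately show ?thesis using Suc True tm1
        by (intro exI[of _ 0]) (auto simp: sg_def neq_Nil_conv)
    next
      case False
      have Lp: "0 < length L" using 3(2) Suc by (cases L) auto
      let ?t = "(t * ?m - 1) / real (length L)"
      have e1: "?t * real (length L) = t * ?m - 1" using Lp by simp
      have Lne: "L \<noteq> []" using Lp by (cases L) auto
      have "\<exists>s. 0 \<le> s \<and> s \<le> 1 \<and> epath (b # L) ?t = seg ((b # L) ! j') ((b # L) ! Suc j') s"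
        apply (rule 3(1)[OF False])
        using 3(2) Suc hm e1 Lne by (simp_all add: of_nat_Suc)
      then show ?thesis using False Suc by simp
    qed
  qed
qed auto

lemma epath_grid:
  "L \<noteq> [] \<Longrightarrow> k \<le> length L - 1 \<Longrightarrow> t * real (length L - 1) = real k \<Longrightarrow> epath L t = dl (L!k)"
proof (induction L t arbitrary: k rule: epath.induct)
  case (3 a b L t)
  let ?m = "real (Suc (length L))"
  have hm: "t * ?m = real k" using 3(4) by simp
  show ?case
  proof (cases "k \<le> 1")
    case True
    then show ?thesis using hm
      by (cases k) (auto simp: sg_def)
  next
    case False
    then obtain k' where k': "k = Suc k'" "1 \<le> k'" by (cases k) auto
    have F: "\<not> t * ?m \<le> 1" using hm False by simp
    have Lp: "0 < length L" using 3(3) k' by (cases L) auto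
    have Lne: "L \<noteq> []" using Lp by (cases L) auto
    let ?t = "(t * ?m - 1) / real (length L)"
    have "epath (b # L) ?t = dl ((b # L) ! k')"
      apply (rule 3(1)[OF F])
      using 3(3) k' hm Lp Lne by (simp_all add: of_nat_Suc)
    then show ?thesis using F k' by simp
  qed
qed auto

definition chain :: "('a, 'b) monoid_scheme \<Rightarrow> 'a set \<Rightarrow> 'a list \<Rightarrow> bool" where
  "chain G S L \<longleftrightarrow> L \<noteq> [] \<and> set L \<subseteq> carrier G \<and> (\<forall>i. Suc i < length L \<longrightarrow> ea G S (L!i) (L!Suc i))"

lemma chain_ea: "chain G S L \<Longrightarrow> Suc i < length L \<Longrightarrow> ea G S (L!i) (L!Suc i)"
  by (auto simp: chain_def)

lemma chain_single[simp]: "chain G S [a] \<longleftrightarrow> a \<in> carrier G"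
  by (auto simp: chain_def)

lemma chain_Cons2[simp]: "chain G S (a # b # L) \<longleftrightarrow> ea G S a b \<and> chain G S (b # L)"
proof
  assume c: "chain G S (a # b # L)"
  have "ea G S a b" using chain_ea[OF c, of 0] by simp
  moreover have "chain G S (b # L)" unfolding chain_def
  proof (intro conjI allI impI)
    show "set (b # L) \<subseteq> carrier G" using c by (simp add: chain_def)
    fix i assume "Suc i < length (b # L)"
    then show "ea G S ((b # L) ! i) ((b # L) ! Suc i)" using chain_ea[OF c, of "Suc i"] by simp
  qed simp
  ultimately show "ea G S a b \<and> chain G S (b # L)" by blast
next
  assume c: "ea G S a b \<and> chain G S (b # L)"
  show "chain G S (a # b # L)" unfolding chain_def
  proof (intro conjI allI impI)
    show "set (a # b # L) \<subseteq> carrier G" using c by (auto simp: chain_def dest: ea_carrier)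
    fix i assume i: "Suc i < length (a # b # L)"
    show "ea G S ((a # b # L) ! i) ((a # b # L) ! Suc i)"
    proof (cases i)
      case 0 then show ?thesis using c by simp
    next
      case (Suc k) then show ?thesis using c i chain_ea[of G S "b # L" k] by simp
    qed
  qed simp
qed

lemma epath_in:
  assumes "chain G S L" "0 \<le> t" "t \<le> 1"
  shows "epath L t \<in> flag_realization G S"
proof (cases "length L - 1 = 0")
  case True
  then obtain a where "L = [a]" using assms(1) by (cases L) (auto simp: chain_def)
  then show ?thesis using assms(1) by (auto intro: dl_in)
next
  case False
  have x0: "0 \<le> t * real (length L - 1)" using assms(2) by simp
  have x1: "t * real (length L - 1) \<le> real (length L - 1)" using assms(2,3) by (simp add: mult_left_le_one_le)
  obtain j where j: "j < length L - 1" "real j \<le> t * real (length L - 1)" "t * real (length L - 1) \<le> real j + 1"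
    using block_exists[OF x0 x1] False by auto
  then obtain s where s: "0 \<le> s" "s \<le> 1" "epath L t = seg (L!j) (L!Suc j) s"
    using epath_seg by blast
  have "ea G S (L!j) (L!Suc j)" using chain_ea[OF assms(1)] j(1) by simp
  then show ?thesis unfolding s(3) by (rule seg_in[OF _ s(1) s(2)])
qed

lemma epath_image: "chain G S L \<Longrightarrow> path_image (epath L) \<subseteq> flag_realization G S"
  unfolding path_image_def by (auto intro!: epath_in)

lemma epath_pathstart: "L \<noteq> [] \<Longrightarrow> pathstart (epath L) = dl (hd L)"
  by (simp add: pathstart_def epath_start)
lemma epath_pathfinish: "L \<noteq> [] \<Longrightarrow> pathfinish (epath L) = dl (last L)"
  by (simp add: pathfinish_def epath_end)


lemma epath_pathstart_Cons[simp]: "pathstart (epath (a # L)) = dl a"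
  by (simp add: epath_pathstart)

lemma path_sg: "path (sg a b)" unfolding path_def by (rule cont_sg)
lemma sg_image: "ea G S a b \<Longrightarrow> path_image (sg a b) \<subseteq> flag_realization G S"
  by (auto simp: path_image_def intro: sg_in)
lemma sg_start[simp]: "pathstart (sg a b) = dl a" by (simp add: pathstart_def sg_def)
lemma sg_finish[simp]: "pathfinish (sg a b) = dl b" by (simp add: pathfinish_def sg_def)
lemma supp_sg: "supp (sg a b s) \<subseteq> {a, b}" unfolding sg_def by (rule supp_seg)
lemma sg_same: "sg a a = (\<lambda>t. dl a)" by (rule ext) (simp add: sg_def)

lemma epath_split:
  assumes "chain G S (a # b # L)"
  shows "homotopic_paths (flag_realization G S) (epath (a # b # L)) (sg a b +++ epath (b # L))"
proof -
  define m where "m = real (Suc (length L))"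
  have m1: "1 \<le> m" and ml: "m = 1 + real (length L)" by (simp_all add: m_def)
  have m0: "m \<noteq> 0" using m1 by simp
  define f where "f = (\<lambda>t::real. if t \<le> 1/2 then 2*t/m else (1 + (2*t - 1) * real (length L)) / m)"
  have cf: "continuous_on {0..1} f" unfolding f_def
  proof (rule continuous_on_cases_le[where h = "\<lambda>t. t"])
    show "continuous_on {t \<in> {0..1}. t \<le> 1 / 2} (\<lambda>t. 2 * t / m)" using m0 by (intro continuous_intros) auto
    show "continuous_on {t \<in> {0..1}. 1 / 2 \<le> t} (\<lambda>t. (1 + (2 * t - 1) * real (length L)) / m)"
      using m0 by (intro continuous_intros) auto
    show "continuous_on {0..1} (\<lambda>t::real. t)" by (rule continuous_on_id)
    fix t :: real assume "t \<in> {0..1}" and th: "t = 1/2"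
    show "2 * t / m = (1 + (2 * t - 1) * real (length L)) / m" unfolding th by simp
  qed
  have f01: "f \<in> {0..1} \<rightarrow> {0..1}"
  proof
    fix t :: real assume t: "t \<in> {0..1}"
    show "f t \<in> {0..1}"
    proof (cases "t \<le> 1/2")
      case True
      then have "0 \<le> 2 * t" "2 * t \<le> m" using t m1 by auto
      then show ?thesis using True m1 by (simp add: f_def)
    next
      case False
      have a: "0 \<le> (2 * t - 1) * real (length L)" using False by simp
      have b: "(2 * t - 1) * real (length L) \<le> real (length L)"
        using t False by (intro mult_left_le_one_le) auto
      have "0 \<le> 1 + (2 * t - 1) * real (length L)" "1 + (2 * t - 1) * real (length L) \<le> m"
        using a b ml by auto
      then show ?thesis using False m1 by (simp add: f_def)
    qed
  qed
  have f0: "f 0 = 0" by (simp add: f_def)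
  have f1: "f 1 = 1" using m0 ml by (simp add: f_def)
  have eq: "(sg a b +++ epath (b # L)) t = epath (a # b # L) (f t)" if t: "t \<in> {0..1}" for t
  proof (cases "t \<le> 1/2")
    case True
    have "f t * real (Suc (length L)) = 2 * t" using True m0 by (simp add: f_def m_def)
    then show ?thesis using True by (simp add: joinpaths_def)
  next
    case False
    have fm: "f t * real (Suc (length L)) = 1 + (2 * t - 1) * real (length L)"
      using False m0 by (simp add: f_def m_def)
    show ?thesis
    proof (cases "L = []")
      case True
      then show ?thesis using False fm by (simp add: joinpaths_def sg_def)
    next
      case nL: False
      then have lp: "0 < real (length L)" by simp
      have "0 < (2 * t - 1) * real (length L)" using False lp by (intro mult_pos_pos) auto
      then have gt: "\<not> 1 + (2 * t - 1) * real (length L) \<le> 1" by simp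
      have "(1 + (2 * t - 1) * real (length L) - 1) / real (length L) = 2 * t - 1" using lp by simp
      then show ?thesis using False fm gt by (simp add: joinpaths_def)
    qed
  qed
  show ?thesis
    by (rule homotopic_paths_reparametrize[OF path_epath epath_image[OF assms] cf f01 f0 f1])
       (use eq in auto)
qed

lemma lid_const:
  assumes "path p" "path_image p \<subseteq> T" "pathstart p = c"
  shows "homotopic_paths T ((\<lambda>t. c) +++ p) p"
proof -
  define f where "f = (\<lambda>t::real. if t \<le> 1/2 then 0 else 2 * t - 1)"
  have cf: "continuous_on {0..1} f" unfolding f_def
    by (rule continuous_on_cases_le[where h = "\<lambda>t. t"]) (auto intro!: continuous_intros)
  have f01: "f \<in> {0..1} \<rightarrow> {0..1}" by (auto simp: f_def)
  have "homotopic_paths T p ((\<lambda>t. c) +++ p)"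
    by (rule homotopic_paths_reparametrize[OF assms(1,2) cf f01])
       (use assms(3) in \<open>auto simp: f_def joinpaths_def pathstart_def\<close>)
  then show ?thesis by (rule homotopic_paths_sym)
qed

section \<open>Moves on vertex lists\<close>

inductive mv :: "('a, 'b) monoid_scheme \<Rightarrow> 'a set \<Rightarrow> 'a list \<Rightarrow> 'a list \<Rightarrow> bool" for G S where
  ins: "tri G S a b c \<Longrightarrow> mv G S (pre @ [a, c] @ post) (pre @ [a, b, c] @ post)"
| dup: "a \<in> carrier G \<Longrightarrow> mv G S (pre @ [a] @ post) (pre @ [a, a] @ post)"

definition eqv :: "('a, 'b) monoid_scheme \<Rightarrow> 'a set \<Rightarrow> 'a list \<Rightarrow> 'a list \<Rightarrow> bool" where
  "eqv G S = (\<lambda>x y. mv G S x y \<or> mv G S y x)\<^sup>*\<^sup>*"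

lemma eqv_refl[simp]: "eqv G S L L" by (simp add: eqv_def)

lemma eqv_sym: "eqv G S L L' \<Longrightarrow> eqv G S L' L"
  unfolding eqv_def
proof (induction rule: rtranclp_induct)
  case (step y z)
  then show ?case by (metis (no_types, lifting) converse_rtranclp_into_rtranclp)
qed simp

lemma eqv_trans: "eqv G S L1 L2 \<Longrightarrow> eqv G S L2 L3 \<Longrightarrow> eqv G S L1 L3"
  unfolding eqv_def by (rule rtranclp_trans)

lemma mv_eqv: "mv G S L L' \<Longrightarrow> eqv G S L L'"
  unfolding eqv_def by auto

lemma mv_ctx: "mv G S L L' \<Longrightarrow> mv G S (pre @ L @ post) (pre @ L' @ post)"
proof (induction rule: mv.induct)
  case (ins a b c pre' post')
  then show ?case using mv.ins[of G S a b c "pre @ pre'" "post' @ post"] by simp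
next
  case (dup a pre' post')
  then show ?case using mv.dup[of a G S "pre @ pre'" "post' @ post"] by simp
qed

lemma eqv_ctx: "eqv G S L L' \<Longrightarrow> eqv G S (pre @ L @ post) (pre @ L' @ post)"
  unfolding eqv_def
proof (induction rule: rtranclp_induct)
  case (step y z)
  then show ?case using mv_ctx[of G S y z pre post] mv_ctx[of G S z y pre post]
    by (metis (no_types, lifting) rtranclp.rtrancl_into_rtrancl)
qed simp

lemma chain_app:
  "xs \<noteq> [] \<Longrightarrow> ys \<noteq> [] \<Longrightarrow> chain G S (xs @ ys) \<longleftrightarrow> chain G S xs \<and> chain G S ys \<and> ea G S (last xs) (hd ys)"
proof (induction xs rule: induct_list012)
  case (2 x)
  then obtain y ys' where ys: "ys = y # ys'" by (cases ys) auto
  show ?case unfolding ys by (auto dest: ea_carrier)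
next
  case (3 x y zs)
  then show ?case by auto
qed simp

lemma chain_ctx:
  assumes "chain G S (pre @ M @ post)" "chain G S M'" "hd M' = hd M" "last M' = last M" "M \<noteq> []" "M' \<noteq> []"
  shows "chain G S (pre @ M' @ post)"
proof -
  have A: "chain G S (M @ post)" and B: "chain G S (M' @ post)"
  proof -
    show "chain G S (M @ post)"
    proof (cases "pre = []")
      case True then show ?thesis using assms(1) by simp
    next
      case False then show ?thesis using assms(1) chain_app[of pre "M @ post" G S] assms(5) by simp
    qed
    then show "chain G S (M' @ post)"
      using assms chain_app[of M post G S] chain_app[of M' post G S] by (cases "post = []") auto
  qed
  show ?thesis
  proof (cases "pre = []")
    case True then show ?thesis using B by simp
  next
    case False
    then show ?thesis using assms(1) chain_app[of pre "M @ post" G S] chain_app[of pre "M' @ post" G S] assms(3,5,6) B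
      by simp
  qed
qed

lemma tri_chain3: "tri G S a b c \<Longrightarrow> chain G S [a, b, c]"
  by (auto simp: tri_def dest: ea_carrier)
lemma tri_chain2: "tri G S a b c \<Longrightarrow> chain G S [a, c]"
  by (auto simp: tri_def dest: ea_carrier)

lemma mv_chain: "mv G S L L' \<Longrightarrow> chain G S L \<longleftrightarrow> chain G S L'"
proof (induction rule: mv.induct)
  case (ins a b c pre post)
  show ?case
    using chain_ctx[of G S pre "[a, c]" post "[a, b, c]"] chain_ctx[of G S pre "[a, b, c]" post "[a, c]"]
      tri_chain2[OF ins] tri_chain3[OF ins] by auto
next
  case (dup a pre post)
  have "chain G S [a, a]" "chain G S [a]" using dup by (auto intro: ea_refl)
  then show ?case
    using chain_ctx[of G S pre "[a]" post "[a, a]"] chain_ctx[of G S pre "[a, a]" post "[a]"] by auto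
qed

lemma chain_sub: "chain G S (pre @ M @ post) \<Longrightarrow> M \<noteq> [] \<Longrightarrow> chain G S (M @ post)"
  using chain_app[of pre "M @ post" G S] by (cases "pre = []") auto

section \<open>Moves give homotopies\<close>

lemma ctx_hom:
  assumes base: "homotopic_paths (flag_realization G S) (epath (M @ post)) (epath (M' @ post))"
    and "chain G S (pre @ M @ post)" "chain G S (pre @ M' @ post)" "hd M = hd M'" "M \<noteq> []" "M' \<noteq> []"
  shows "homotopic_paths (flag_realization G S) (epath (pre @ M @ post)) (epath (pre @ M' @ post))"
  using assms(2,3)
proof (induction pre)
  case Nil then show ?case using base by simp
next
  case (Cons x pre)
  let ?T = "pre @ M @ post" and ?T' = "pre @ M' @ post"
  obtain y T1 where T: "?T = y # T1" using assms(5) by (cases ?T) auto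
  obtain y' T1' where T': "?T' = y' # T1'" using assms(6) by (cases ?T') auto
  have "hd ?T = hd ?T'" using assms(4,5,6) by (cases pre) (simp_all add: hd_append)
  then have yy: "y' = y" using T T' by simp
  have c1: "chain G S (x # y # T1)" using Cons(2) T by simp
  have c2: "chain G S (x # y # T1')" using Cons(3) T' yy by simp
  have cT: "chain G S ?T" using c1 T by simp
  have cT': "chain G S ?T'" using c2 T' yy by simp
  have IH: "homotopic_paths (flag_realization G S) (epath ?T) (epath ?T')"
    using Cons.IH cT cT' by simp
  have h1: "homotopic_paths (flag_realization G S) (epath (x # y # T1)) (sg x y +++ epath (y # T1))"
    by (rule epath_split[OF c1])
  have h2: "homotopic_paths (flag_realization G S) (epath (x # y # T1')) (sg x y +++ epath (y # T1'))"
    by (rule epath_split[OF c2])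
  have exy: "ea G S x y" using c1 by simp
  have h3: "homotopic_paths (flag_realization G S) (sg x y +++ epath (y # T1)) (sg x y +++ epath (y # T1'))"
    by (rule homotopic_paths_join) (use IH T T' yy exy path_sg sg_image[OF exy] in auto)
  have "homotopic_paths (flag_realization G S) (epath (x # y # T1)) (epath (x # y # T1'))"
    using h1 h2 h3 by (meson homotopic_paths_sym homotopic_paths_trans)
  then show ?case using T T' yy by (simp del: epath.simps)
qed

lemma base_ins:
  assumes t: "tri G S a b c" and ch: "chain G S (c # post)"
  shows "homotopic_paths (flag_realization G S) (epath (a # c # post)) (epath (a # b # c # post))"
proof -
  let ?X = "flag_realization G S"
  have eab: "ea G S a b" and ebc: "ea G S b c" and eac: "ea G S a c" using t by (auto simp: tri_def)
  have c1: "chain G S (a # c # post)" using eac ch by simp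
  have c3: "chain G S (b # c # post)" using ebc ch by simp
  have c2: "chain G S (a # b # c # post)" using eab c3 by simp
  have h1: "homotopic_paths ?X (epath (a # c # post)) (sg a c +++ epath (c # post))" by (rule epath_split[OF c1])
  have h2: "homotopic_paths ?X (epath (a # b # c # post)) (sg a b +++ epath (b # c # post))" by (rule epath_split[OF c2])
  have h3: "homotopic_paths ?X (epath (b # c # post)) (sg b c +++ epath (c # post))" by (rule epath_split[OF c3])
  have pe: "path (epath (c # post))" "path_image (epath (c # post)) \<subseteq> ?X" using ch by (auto simp: path_epath epath_image)
  have h4: "homotopic_paths ?X (sg a b +++ epath (b # c # post)) (sg a b +++ (sg b c +++ epath (c # post)))"
    by (rule homotopic_paths_join) (use h3 eab path_sg sg_image[OF eab] epath_pathstart[of "b # c # post"] in auto)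
  have h5: "homotopic_paths ?X (sg a b +++ (sg b c +++ epath (c # post))) ((sg a b +++ sg b c) +++ epath (c # post))"
    by (rule homotopic_paths_assoc) (use pe path_sg sg_image[OF eab] sg_image[OF ebc] epath_pathstart in auto)
  have h6: "homotopic_paths ?X (sg a c) (sg a b +++ sg b c)"
  proof (rule SL_paths)
    show "path (sg a c)" "path (sg a b +++ sg b c)" by (auto simp: path_sg)
    show "path_image (sg a c) \<subseteq> ?X" by (rule sg_image[OF eac])
    show "path_image (sg a b +++ sg b c) \<subseteq> ?X"
      using path_image_join_subset[of "sg a b" "sg b c"] sg_image[OF eab] sg_image[OF ebc] by auto
    show "pathstart (sg a b +++ sg b c) = pathstart (sg a c)" "pathfinish (sg a b +++ sg b c) = pathfinish (sg a c)"
      by auto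
    fix t :: real assume "t \<in> {0..1}"
    have "supp (sg a c t) \<union> supp ((sg a b +++ sg b c) t) \<subseteq> {a, b, c}"
      using supp_sg[of a c t] supp_sg[of a b "2 * t"] supp_sg[of b c "2 * t - 1"]
      by (auto simp: joinpaths_def)
    moreover have "supp (sg a c t) \<noteq> {}" using realization_supp_ne[OF sg_in[OF eac]] by blast
    ultimately show "flag_simplex G S (supp (sg a c t) \<union> supp ((sg a b +++ sg b c) t))"
      using flag_simplex_subset[OF flag_simplex_tri[OF t]] by blast
  qed
  have h7: "homotopic_paths ?X (sg a c +++ epath (c # post)) ((sg a b +++ sg b c) +++ epath (c # post))"
    by (rule homotopic_paths_join) (use h6 pe epath_pathstart in auto)
  show ?thesis using h1 h2 h4 h5 h7 by (meson homotopic_paths_sym homotopic_paths_trans)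
qed

lemma base_dup:
  assumes ch: "chain G S (a # post)"
  shows "homotopic_paths (flag_realization G S) (epath (a # post)) (epath (a # a # post))"
proof -
  let ?X = "flag_realization G S"
  have a: "a \<in> carrier G" using ch by (simp add: chain_def)
  have c2: "chain G S (a # a # post)" using ch a by (simp add: ea_refl)
  have h1: "homotopic_paths ?X (epath (a # a # post)) ((\<lambda>t. dl a) +++ epath (a # post))"
    using epath_split[OF c2] by (simp add: sg_same)
  have h2: "homotopic_paths ?X ((\<lambda>t. dl a) +++ epath (a # post)) (epath (a # post))"
    by (rule lid_const) (use ch in \<open>auto simp: path_epath epath_image epath_pathstart\<close>)
  show ?thesis using h1 h2 by (meson homotopic_paths_sym homotopic_paths_trans)
qed

lemma mv_hom: "mv G S L L' \<Longrightarrow> chain G S L \<Longrightarrow> homotopic_paths (flag_realization G S) (epath L) (epath L')"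
proof (induction rule: mv.induct)
  case (ins a b c pre post)
  have ch': "chain G S (pre @ [a, b, c] @ post)" using mv_chain[OF mv.ins[OF ins(1)]] ins(2) by blast
  have "chain G S ([a, c] @ post)" using chain_sub[OF ins(2)] by simp
  then have "chain G S (c # post)" by simp
  then have "homotopic_paths (flag_realization G S) (epath ([a, c] @ post)) (epath ([a, b, c] @ post))"
    using base_ins[OF ins(1)] by simp
  then show ?case by (rule ctx_hom) (use ins(2) ch' in auto)
next
  case (dup a pre post)
  have ch': "chain G S (pre @ [a, a] @ post)" using mv_chain[OF mv.dup[OF dup(1)]] dup(2) by blast
  have "chain G S ([a] @ post)" using chain_sub[OF dup(2)] by simp
  then have "homotopic_paths (flag_realization G S) (epath ([a] @ post)) (epath ([a, a] @ post))"
    using base_dup by simp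
  then show ?case by (rule ctx_hom) (use dup(2) ch' in auto)
qed

lemma eqv_hom:
  "eqv G S L L' \<Longrightarrow> chain G S L \<Longrightarrow> chain G S L' \<and> homotopic_paths (flag_realization G S) (epath L) (epath L')"
  unfolding eqv_def
proof (induction rule: rtranclp_induct)
  case base
  then show ?case by (simp add: path_epath epath_image)
next
  case (step y z)
  then have cy: "chain G S y" and hy: "homotopic_paths (flag_realization G S) (epath L) (epath y)" by auto
  from step(2) show ?case
  proof
    assume m: "mv G S y z"
    then have cz: "chain G S z" using mv_chain cy by blast
    show ?thesis using cz hy mv_hom[OF m cy] by (meson homotopic_paths_trans)
  next
    assume m: "mv G S z y"
    then have cz: "chain G S z" using mv_chain cy by blast
    show ?thesis using cz hy mv_hom[OF m cz] by (meson homotopic_paths_sym homotopic_paths_trans)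
  qed
qed

lemma eqv_chain: "eqv G S L L' \<Longrightarrow> chain G S L \<Longrightarrow> chain G S L'"
  using eqv_hom by blast


definition ev :: "('a, 'b) monoid_scheme \<Rightarrow> 'a \<times> bool \<Rightarrow> 'a" where
  "ev G l = (if snd l then inv\<^bsub>G\<^esub> (fst l) else fst l)"

lemma word_eval_Nil[simp]: "word_eval G [] = \<one>\<^bsub>G\<^esub>" by (simp add: word_eval_def)
lemma word_eval_Cons[simp]: "word_eval G (l # w) = ev G l \<otimes>\<^bsub>G\<^esub> word_eval G w"
  by (simp add: word_eval_def ev_def)

fun vl :: "('a, 'b) monoid_scheme \<Rightarrow> 'a \<Rightarrow> 'a word \<Rightarrow> 'a list" where
  "vl G x [] = [x]"
| "vl G x (l # w) = x # vl G (x \<otimes>\<^bsub>G\<^esub> ev G l) w"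

definition lab :: "('a, 'b) monoid_scheme \<Rightarrow> 'a set \<Rightarrow> 'a \<Rightarrow> 'a \<Rightarrow> 'a word" where
  "lab G S g h = (if g = h then [] else if inv\<^bsub>G\<^esub> g \<otimes>\<^bsub>G\<^esub> h \<in> S then [(inv\<^bsub>G\<^esub> g \<otimes>\<^bsub>G\<^esub> h, False)]
      else [(inv\<^bsub>G\<^esub> h \<otimes>\<^bsub>G\<^esub> g, True)])"

fun wd :: "('a, 'b) monoid_scheme \<Rightarrow> 'a set \<Rightarrow> 'a list \<Rightarrow> 'a word" where
  "wd G S [] = []"
| "wd G S [a] = []"
| "wd G S (a # b # L) = lab G S a b @ wd G S (b # L)"

definition filt :: "'a set \<Rightarrow> 'a word \<Rightarrow> 'a word" where
  "filt S w = filter (\<lambda>l. fst l \<in> S) w"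

section \<open>Free reduction\<close>

lemma free_red_ctx: "free_red a b \<Longrightarrow> free_red (c @ a @ d) (c @ b @ d)"
  unfolding free_red_def
proof (elim exE conjE)
  fix p q x assume "a = p @ [x, inv_letter x] @ q" "b = p @ q"
  then show "\<exists>p q x. c @ a @ d = p @ [x, inv_letter x] @ q \<and> c @ b @ d = p @ q"
    by (intro exI[of _ "c @ p"] exI[of _ "q @ d"] exI[of _ x]) simp
qed

lemma free_red_I: "free_red (p @ [x, inv_letter x] @ q) (p @ q)"
  unfolding free_red_def by blast

lemma free_eq_refl[simp]: "free_eq w w" by (simp add: free_eq_def)

lemma free_eq_sym: "free_eq a b \<Longrightarrow> free_eq b a"
  unfolding free_eq_def
proof (induction rule: rtranclp_induct)
  case (step y z)
  then show ?case by (metis (no_types, lifting) converse_rtranclp_into_rtranclp)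
qed simp

lemma free_eq_trans: "free_eq a b \<Longrightarrow> free_eq b c \<Longrightarrow> free_eq a c"
  unfolding free_eq_def by (rule rtranclp_trans)

lemma free_red_eq: "free_red a b \<Longrightarrow> free_eq a b"
  unfolding free_eq_def by auto

lemma free_eq_ctx: "free_eq a b \<Longrightarrow> free_eq (c @ a @ d) (c @ b @ d)"
  unfolding free_eq_def
proof (induction rule: rtranclp_induct)
  case (step y z)
  then show ?case using free_red_ctx[of y z c d] free_red_ctx[of z y c d]
    by (metis (no_types, lifting) rtranclp.rtrancl_into_rtrancl)
qed simp

lemma inv_letter_inv[simp]: "inv_letter (inv_letter x) = x" by (simp add: inv_letter_def)
lemma fst_inv_letter[simp]: "fst (inv_letter x) = fst x" by (simp add: inv_letter_def)
lemma snd_inv_letter[simp]: "snd (inv_letter x) = (\<not> snd x)" by (simp add: inv_letter_def)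
lemma inv_word_Nil[simp]: "inv_word [] = []" by (simp add: inv_word_def)
lemma inv_word_Cons[simp]: "inv_word (l # w) = inv_word w @ [inv_letter l]" by (simp add: inv_word_def)
lemma inv_word_append[simp]: "inv_word (a @ b) = inv_word b @ inv_word a" by (simp add: inv_word_def)
lemma inv_word_inv[simp]: "inv_word (inv_word w) = w" by (simp add: inv_word_def rev_map comp_def)
lemma length_inv_word[simp]: "length (inv_word w) = length w" by (simp add: inv_word_def)

lemma cancel_r: "free_eq (u @ inv_word u) []"
proof (induction u)
  case (Cons l u)
  have "free_eq ([l] @ (u @ inv_word u) @ [inv_letter l]) ([l] @ [] @ [inv_letter l])"
    by (rule free_eq_ctx[OF Cons])
  moreover have "free_eq ([] @ [l, inv_letter l] @ []) ([] @ [])" by (rule free_red_eq[OF free_red_I])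
  ultimately show ?case by (auto intro: free_eq_trans)
qed simp

lemma cancel_l: "free_eq (inv_word u @ u) []"
  using cancel_r[of "inv_word u"] by simp

lemma word_over_Nil[simp]: "word_over S []" by (simp add: word_over_def)
lemma word_over_Cons[simp]: "word_over S (l # w) \<longleftrightarrow> fst l \<in> S \<and> word_over S w" by (simp add: word_over_def)
lemma word_over_append[simp]: "word_over S (a @ b) \<longleftrightarrow> word_over S a \<and> word_over S b"
  by (auto simp: word_over_def)
lemma word_over_inv_word[simp]: "word_over S (inv_word w) \<longleftrightarrow> word_over S w"
  by (induction w) auto

lemma filt_id: "word_over S w \<Longrightarrow> filt S w = w"
  by (induction w) (auto simp: filt_def)
lemma filt_append[simp]: "filt S (a @ b) = filt S a @ filt S b" by (simp add: filt_def)
lemma filt_over: "word_over S (filt S w)" by (induction w) (auto simp: filt_def)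

lemma free_red_filt: "free_red u v \<Longrightarrow> free_red (filt S u) (filt S v) \<or> filt S u = filt S v"
proof -
  assume "free_red u v"
  then obtain p q x where u: "u = p @ [x, inv_letter x] @ q" and v: "v = p @ q" by (auto simp: free_red_def)
  show ?thesis
  proof (cases "fst x \<in> S")
    case True
    then have "filt S u = filt S p @ [x, inv_letter x] @ filt S q" by (simp add: u filt_def)
    then show ?thesis using free_red_I[of "filt S p" x "filt S q"] by (simp add: v)
  next
    case False
    then show ?thesis by (simp add: u v filt_def)
  qed
qed

locale fctx = group G for G :: "('a, 'b) monoid_scheme" (structure) +
  fixes S :: "'a set"
  assumes S_sub: "S \<subseteq> carrier G" and S_noinv: "\<forall>s\<in>S. inv s \<notin> S"
begin

lemma S_carr: "s \<in> S \<Longrightarrow> s \<in> carrier G" using S_sub by auto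

lemma one_notin_S: "\<one> \<notin> S"
  using S_noinv inv_one by fastforce

lemma ev_carrier: "fst l \<in> S \<Longrightarrow> ev G l \<in> carrier G"
  by (auto simp: ev_def S_carr)

lemma ev_ne_one: "fst l \<in> S \<Longrightarrow> ev G l \<noteq> \<one>"
  using one_notin_S S_carr by (auto simp: ev_def)

lemma ev_inv_letter: "fst l \<in> carrier G \<Longrightarrow> ev G (inv_letter l) = inv (ev G l)"
  by (auto simp: ev_def inv_letter_def)

lemma word_eval_carrier: "word_over S w \<Longrightarrow> word_eval G w \<in> carrier G"
  by (induction w) (auto simp: ev_carrier)

lemma word_eval_append:
  "word_over S a \<Longrightarrow> word_over S b \<Longrightarrow> word_eval G (a @ b) = word_eval G a \<otimes> word_eval G b"
  by (induction a) (auto simp: m_assoc ev_carrier word_eval_carrier)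

lemma word_eval_inv_word: "word_over S w \<Longrightarrow> word_eval G (inv_word w) = inv (word_eval G w)"
proof (induction w)
  case (Cons l w)
  have c: "ev G l \<in> carrier G" "word_eval G w \<in> carrier G" "fst l \<in> carrier G"
    using Cons(2) by (auto simp: ev_carrier word_eval_carrier S_carr)
  have "word_eval G (inv_word (l # w)) = word_eval G (inv_word w) \<otimes> word_eval G [inv_letter l]"
    using Cons(2) by (simp add: word_eval_append del: word_eval_Cons)
  also have "\<dots> = inv (word_eval G w) \<otimes> inv (ev G l)"
    using Cons c by (simp add: ev_inv_letter)
  also have "\<dots> = inv (ev G l \<otimes> word_eval G w)" using c by (simp add: inv_mult_group)
  finally show ?case by simp
qed simp

lemma ea_step: "x \<in> carrier G \<Longrightarrow> fst l \<in> S \<Longrightarrow> ea G S x (x \<otimes> ev G l)"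
proof -
  assume x: "x \<in> carrier G" and l: "fst l \<in> S"
  have e: "ev G l \<in> carrier G" "ev G l \<noteq> \<one>" using l ev_carrier ev_ne_one by auto
  have ne: "x \<noteq> x \<otimes> ev G l"
  proof
    assume "x = x \<otimes> ev G l"
    then have "x \<otimes> \<one> = x \<otimes> ev G l" using x by simp
    then show False using e x by simp
  qed
  have s: "fst l \<in> carrier G" using l S_carr by simp
  have adj: "inv x \<otimes> (x \<otimes> ev G l) \<in> S \<or> inv (x \<otimes> ev G l) \<otimes> x \<in> S"
  proof (cases "snd l")
    case True
    have "inv (x \<otimes> inv (fst l)) \<otimes> x = fst l"
      using x s by (simp add: inv_mult_group m_assoc)
    then show ?thesis using True l by (simp add: ev_def)
  next
    case False
    have "inv x \<otimes> (x \<otimes> fst l) = fst l" using x s by (simp add: m_assoc[symmetric])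
    then show ?thesis using False l by (simp add: ev_def)
  qed
  show ?thesis using x e ne adj by (simp add: ea_def cayley_adj_def)
qed

lemma lab_step: "x \<in> carrier G \<Longrightarrow> fst l \<in> S \<Longrightarrow> lab G S x (x \<otimes> ev G l) = [l]"
proof -
  assume x: "x \<in> carrier G" and l: "fst l \<in> S"
  have ne: "x \<noteq> x \<otimes> ev G l" using ea_step[OF x l] ev_ne_one[OF l] ev_carrier[OF l] x
    by (metis l_cancel_one')
  have s: "fst l \<in> carrier G" using l S_carr by simp
  show ?thesis
  proof (cases "snd l")
    case True
    have i1: "inv x \<otimes> (x \<otimes> inv (fst l)) = inv (fst l)" using x s by (simp add: m_assoc[symmetric])
    have i2: "inv (x \<otimes> inv (fst l)) \<otimes> x = fst l" using x s by (simp add: inv_mult_group m_assoc)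
    have "inv (fst l) \<notin> S" using S_noinv l by blast
    then show ?thesis using True ne i1 i2 by (simp add: lab_def ev_def prod_eq_iff)
  next
    case False
    have i1: "inv x \<otimes> (x \<otimes> fst l) = fst l" using x s by (simp add: m_assoc[symmetric])
    then show ?thesis using False ne l by (simp add: lab_def ev_def prod_eq_iff)
  qed
qed

lemma lab_same[simp]: "lab G S a a = []" by (simp add: lab_def)

lemma lab_ea: "ea G S a b \<Longrightarrow> a \<noteq> b \<Longrightarrow> \<exists>l. lab G S a b = [l] \<and> fst l \<in> S \<and> a \<otimes> ev G l = b"
proof -
  assume e: "ea G S a b" and ne: "a \<noteq> b"
  have ab: "a \<in> carrier G" "b \<in> carrier G" using e by (auto simp: ea_def)
  have adj: "inv a \<otimes> b \<in> S \<or> inv b \<otimes> a \<in> S" using e ne by (auto simp: ea_def cayley_adj_def)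
  show ?thesis
  proof (cases "inv a \<otimes> b \<in> S")
    case True
    have "a \<otimes> (inv a \<otimes> b) = b" using ab by (simp add: m_assoc[symmetric])
    then show ?thesis using True ne by (intro exI[of _ "(inv a \<otimes> b, False)"]) (simp add: lab_def ev_def)
  next
    case False
    then have s: "inv b \<otimes> a \<in> S" using adj by simp
    have "a \<otimes> inv (inv b \<otimes> a) = b" using ab by (simp add: inv_mult_group m_assoc[symmetric])
    then show ?thesis using False s ne by (intro exI[of _ "(inv b \<otimes> a, True)"]) (simp add: lab_def ev_def)
  qed
qed

lemma lab_over: "ea G S a b \<Longrightarrow> word_over S (lab G S a b)"
  using lab_ea[of a b] by (cases "a = b") auto

lemma vl_ne[simp]: "vl G x w \<noteq> []" by (cases w) auto
lemma vl_hd[simp]: "hd (vl G x w) = x" by (cases w) auto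
lemma vl_Cons_ex: "\<exists>r. vl G x w = x # r" by (cases w) auto

lemma vl_last: "x \<in> carrier G \<Longrightarrow> word_over S w \<Longrightarrow> last (vl G x w) = x \<otimes> word_eval G w"
  by (induction w arbitrary: x) (auto simp: m_assoc ev_carrier word_eval_carrier)

lemma chain_vl: "x \<in> carrier G \<Longrightarrow> word_over S w \<Longrightarrow> chain G S (vl G x w)"
proof (induction w arbitrary: x)
  case (Cons l w)
  let ?y = "x \<otimes> ev G l"
  have y: "?y \<in> carrier G" using Cons by (simp add: ev_carrier)
  obtain r where r: "vl G ?y w = ?y # r" using vl_Cons_ex by blast
  have "chain G S (vl G ?y w)" using Cons y by simp
  then show ?case using r ea_step[of x l] Cons(2,3) by simp
qed simp

lemma vl_append:
  "x \<in> carrier G \<Longrightarrow> word_over S a \<Longrightarrow> vl G x (a @ b) = butlast (vl G x a) @ vl G (x \<otimes> word_eval G a) b"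
proof (induction a arbitrary: x)
  case (Cons l a)
  let ?y = "x \<otimes> ev G l"
  have y: "?y \<in> carrier G" using Cons by (simp add: ev_carrier)
  have "vl G x ((l # a) @ b) = x # vl G ?y (a @ b)" by simp
  also have "\<dots> = x # butlast (vl G ?y a) @ vl G (?y \<otimes> word_eval G a) b" using Cons y by simp
  also have "?y \<otimes> word_eval G a = x \<otimes> word_eval G (l # a)"
    using Cons by (simp add: m_assoc ev_carrier word_eval_carrier)
  finally show ?case by simp
qed simp

lemma wd_vl: "x \<in> carrier G \<Longrightarrow> word_over S w \<Longrightarrow> wd G S (vl G x w) = w"
proof (induction w arbitrary: x)
  case (Cons l w)
  let ?y = "x \<otimes> ev G l"
  have y: "?y \<in> carrier G" using Cons by (simp add: ev_carrier)
  obtain r where r: "vl G ?y w = ?y # r" using vl_Cons_ex by blast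
  have "wd G S (vl G ?y w) = w" using Cons y by simp
  then show ?case using r lab_step[of x l] Cons(2,3) by simp
qed simp

lemma wd_append: "xs \<noteq> [] \<Longrightarrow> ys \<noteq> [] \<Longrightarrow> wd G S (xs @ ys) = wd G S xs @ lab G S (last xs) (hd ys) @ wd G S ys"
proof (induction xs rule: induct_list012)
  case (2 x)
  then obtain y ys' where "ys = y # ys'" by (cases ys) auto
  then show ?case by simp
qed simp_all

lemma vl_wd: "chain G S L \<Longrightarrow> eqv G S (vl G (hd L) (wd G S L)) L \<and> word_over S (wd G S L) \<and>
    last L = hd L \<otimes> word_eval G (wd G S L)"
proof (induction L rule: induct_list012)
  case 1 then show ?case by (simp add: chain_def)
next
  case (2 x) then show ?case by simp
next
  case (3 x y zs)
  have exy: "ea G S x y" and cy: "chain G S (y # zs)" using 3(3) by auto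
  have x: "x \<in> carrier G" and yc: "y \<in> carrier G" using exy by (auto simp: ea_def)
  have IH: "eqv G S (vl G y (wd G S (y # zs))) (y # zs)" "word_over S (wd G S (y # zs))"
     "last (y # zs) = y \<otimes> word_eval G (wd G S (y # zs))" using 3(2)[OF cy] by auto
  show ?case
  proof (cases "x = y")
    case True
    have "mv G S ([y] @ zs) ([y, y] @ zs)" using mv.dup[of y G S "[]" zs] yc by simp
    then have "eqv G S (y # zs) (x # y # zs)" using True by (simp add: mv_eqv)
    then show ?thesis using IH True by (auto intro: eqv_trans)
  next
    case False
    obtain l where l: "lab G S x y = [l]" "fst l \<in> S" "x \<otimes> ev G l = y" using lab_ea[OF exy False] by blast
    have E: "eqv G S ([x] @ vl G y (wd G S (y # zs)) @ []) ([x] @ (y # zs) @ [])"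
      by (rule eqv_ctx[OF IH(1)])
    have ee: "y \<otimes> word_eval G (wd G S (y # zs)) = x \<otimes> (ev G l \<otimes> word_eval G (wd G S (y # zs)))"
      by (subst l(3)[symmetric]) (simp add: m_assoc ev_carrier[OF l(2)] word_eval_carrier[OF IH(2)] x)
    moreover have "last (x # y # zs) = x \<otimes> word_eval G (wd G S (x # y # zs))"
      using IH(3) l ee by simp
    ultimately show ?thesis using l IH(2) E by simp
  qed
qed

section \<open>Vertex lists of freely equal words\<close>

lemma fr_vl:
  assumes x: "x \<in> carrier G" and u: "word_over S u" and fr: "free_red u v"
  shows "eqv G S (vl G x u) (vl G x v)"
proof -
  obtain p q l where uu: "u = p @ [l, inv_letter l] @ q" and vv: "v = p @ q" using fr by (auto simp: free_red_def)
  have p: "word_over S p" and l: "fst l \<in> S" and q: "word_over S q" using u uu by auto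
  let ?z = "x \<otimes> word_eval G p"
  have z: "?z \<in> carrier G" using x p by (simp add: word_eval_carrier)
  have e: "ev G l \<in> carrier G" using l by (simp add: ev_carrier)
  have zz: "?z \<otimes> ev G l \<otimes> ev G (inv_letter l) = ?z"
    using z e l S_carr by (simp add: ev_inv_letter m_assoc)
  obtain r where r: "vl G ?z q = ?z # r" using vl_Cons_ex by blast
  have A: "vl G x u = butlast (vl G x p) @ ([?z, ?z \<otimes> ev G l, ?z] @ r)"
    using x p uu zz r by (simp add: vl_append)
  have B: "vl G x v = butlast (vl G x p) @ ([?z] @ r)"
    using x p vv r by (simp add: vl_append)
  have t: "tri G S ?z (?z \<otimes> ev G l) ?z"
    using ea_step[OF z l] by (auto simp: tri_def intro: ea_sym ea_refl z)
  have m1: "mv G S ([] @ [?z, ?z] @ r) ([] @ [?z, ?z \<otimes> ev G l, ?z] @ r)" by (rule mv.ins[OF t])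
  have m2: "mv G S ([] @ [?z] @ r) ([] @ [?z, ?z] @ r)" by (rule mv.dup[OF z])
  have a: "eqv G S ([?z, ?z] @ r) ([?z, ?z \<otimes> ev G l, ?z] @ r)" using mv_eqv[OF m1] by simp
  have b: "eqv G S ([?z] @ r) ([?z, ?z] @ r)" using mv_eqv[OF m2] by simp
  have "eqv G S ([?z, ?z \<otimes> ev G l, ?z] @ r) ([?z] @ r)"
    by (rule eqv_trans[OF eqv_sym[OF a] eqv_sym[OF b]])
  then have "eqv G S (butlast (vl G x p) @ ([?z, ?z \<otimes> ev G l, ?z] @ r) @ []) (butlast (vl G x p) @ ([?z] @ r) @ [])"
    by (rule eqv_ctx)
  then show ?thesis using A B by simp
qed

lemma free_eq_vl:
  assumes x: "x \<in> carrier G" and w: "word_over S w" and w': "word_over S w'" and fe: "free_eq w w'"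
  shows "eqv G S (vl G x w) (vl G x w')"
proof -
  have "eqv G S (vl G x (filt S w)) (vl G x (filt S w'))"
    using fe unfolding free_eq_def
  proof (induction rule: rtranclp_induct)
    case (step y z)
    have fy: "word_over S (filt S y)" and fz: "word_over S (filt S z)" by (rule filt_over)+
    from step(2) have "eqv G S (vl G x (filt S y)) (vl G x (filt S z))"
    proof
      assume "free_red y z"
      then have "free_red (filt S y) (filt S z) \<or> filt S y = filt S z" by (rule free_red_filt)
      then show ?thesis using fr_vl[OF x fy] by auto
    next
      assume "free_red z y"
      then have "free_red (filt S z) (filt S y) \<or> filt S z = filt S y" by (rule free_red_filt)
      then show ?thesis
      proof
        assume "free_red (filt S z) (filt S y)"
        from fr_vl[OF x fz this] show ?thesis by (rule eqv_sym)
      qed simp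
    qed
    then show ?case using step(3) by (rule eqv_trans[rotated])
  qed simp
  then show ?thesis using filt_id[OF w] filt_id[OF w'] by simp
qed

lemma loop3:
  assumes y: "y \<in> carrier G" and r: "word_over S r" "length r = 3" "word_eval G r = \<one>" and X: "word_over S X"
  shows "eqv G S (vl G y (r @ X)) (vl G y X)"
proof -
  have "\<exists>l1 l2 l3. r = [l1, l2, l3]" using r(2) by (auto simp: numeral_3_eq_3 length_Suc_conv)
  then obtain l1 l2 l3 where rr: "r = [l1, l2, l3]" by blast
  define y1 where "y1 = y \<otimes> ev G l1"
  define y2 where "y2 = y1 \<otimes> ev G l2"
  define y3 where "y3 = y2 \<otimes> ev G l3"
  have vr: "vl G y r = [y, y1, y2, y3]" by (simp add: rr y1_def y2_def y3_def)
  have "last (vl G y r) = y \<otimes> word_eval G r" by (rule vl_last[OF y r(1)])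
  then have y3y: "y3 = y" using vr r(3) y by simp
  have ch: "chain G S [y, y1, y2, y3]" using chain_vl[OF y r(1)] vr by simp
  then have e1: "ea G S y y1" and e2: "ea G S y1 y2" and e3: "ea G S y2 y" using y3y by simp_all
  obtain R where R: "vl G y X = y # R" using vl_Cons_ex by blast
  have "vl G y (r @ X) = butlast (vl G y r) @ vl G (y \<otimes> word_eval G r) X" by (rule vl_append[OF y r(1)])
  then have A: "vl G y (r @ X) = [y, y1, y2] @ ([y] @ R)" using vr r(3) y R by simp
  have t1: "tri G S y y1 y2" using e1 e2 e3 by (simp add: tri_def ea_sym)
  have t2: "tri G S y y2 y" using e3 y by (simp add: tri_def ea_sym ea_refl)
  have m1: "mv G S ([] @ [y, y2] @ ([y] @ R)) ([] @ [y, y1, y2] @ ([y] @ R))" by (rule mv.ins[OF t1])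
  have m2: "mv G S ([] @ [y, y] @ R) ([] @ [y, y2, y] @ R)" by (rule mv.ins[OF t2])
  have m3: "mv G S ([] @ [y] @ R) ([] @ [y, y] @ R)" by (rule mv.dup[OF y])
  have a1: "eqv G S ([y, y1, y2] @ ([y] @ R)) ([y, y2] @ ([y] @ R))" using eqv_sym[OF mv_eqv[OF m1]] by simp
  have a2: "eqv G S ([y, y2] @ ([y] @ R)) ([y, y] @ R)" using eqv_sym[OF mv_eqv[OF m2]] by simp
  have a3: "eqv G S ([y, y] @ R) ([y] @ R)" using eqv_sym[OF mv_eqv[OF m3]] by simp
  have "eqv G S (vl G y (r @ X)) (y # R)"
    unfolding A using eqv_trans[OF eqv_trans[OF a1 a2] a3] by simp
  then show ?thesis using R by simp
qed

lemma rel_props: "r \<in> triangle_relators G S \<Longrightarrow> word_over S r \<and> length r = 3 \<and> word_eval G r = \<one>"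
  by (auto simp: triangle_relators_def ev_def m_assoc S_carr)

lemma nc_eqv:
  assumes x: "x \<in> carrier G" and w: "word_over S w" and nc: "in_normal_closure S (triangle_relators G S) w"
  shows "eqv G S (vl G x w) [x]"
proof -
  define f :: "'a word \<times> 'a word \<times> bool \<Rightarrow> 'a word" where
    "f = (\<lambda>(u, r, e). u @ (if e then inv_word r else r) @ inv_word u)"
  obtain L where L: "\<forall>(u, r, e) \<in> set L. word_over S u \<and> r \<in> triangle_relators G S"
    and fe: "free_eq w (concat (map f L))"
    using nc unfolding in_normal_closure_def f_def by blast
  have main: "word_over S (concat (map f L)) \<and> eqv G S (vl G x (concat (map f L))) [x]" using L
  proof (induction L)
    case Nil then show ?case by simp
  next
    case (Cons a L)
    obtain u r e where a: "a = (u, r, e)" by (cases a) auto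
    have u: "word_over S u" and rR: "r \<in> triangle_relators G S" using Cons(2) a by auto
    have IH: "word_over S (concat (map f L))" "eqv G S (vl G x (concat (map f L))) [x]" using Cons by auto
    let ?r = "if e then inv_word r else r"
    let ?C = "concat (map f L)"
    have rp: "word_over S r" "length r = 3" "word_eval G r = \<one>" using rel_props[OF rR] by auto
    have r': "word_over S ?r" "length ?r = 3" "word_eval G ?r = \<one>"
      using rp by (auto simp: word_eval_inv_word)
    have cc: "concat (map f (a # L)) = u @ (?r @ (inv_word u @ ?C))" by (simp add: a f_def)
    let ?y = "x \<otimes> word_eval G u"
    have y: "?y \<in> carrier G" using x u by (simp add: word_eval_carrier)
    have s1: "eqv G S (vl G ?y (?r @ (inv_word u @ ?C))) (vl G ?y (inv_word u @ ?C))"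
      by (rule loop3[OF y r']) (use u IH in simp)
    have "eqv G S (butlast (vl G x u) @ vl G ?y (?r @ (inv_word u @ ?C)) @ [])
                  (butlast (vl G x u) @ vl G ?y (inv_word u @ ?C) @ [])"
      by (rule eqv_ctx[OF s1])
    then have s2: "eqv G S (vl G x (u @ (?r @ (inv_word u @ ?C)))) (vl G x (u @ (inv_word u @ ?C)))"
      using x u by (simp add: vl_append)
    have "free_eq ([] @ (u @ inv_word u) @ ?C) ([] @ [] @ ?C)" by (rule free_eq_ctx[OF cancel_r])
    then have s3: "eqv G S (vl G x (u @ (inv_word u @ ?C))) (vl G x ?C)"
      by (intro free_eq_vl[OF x]) (use u IH in auto)
    have "eqv G S (vl G x (concat (map f (a # L)))) [x]"
      unfolding cc by (rule eqv_trans[OF s2 eqv_trans[OF s3 IH(2)]])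
    moreover have "word_over S (concat (map f (a # L)))" unfolding cc using u r'(1) IH(1) by simp
    ultimately show ?case by simp
  qed
  have "eqv G S (vl G x w) (vl G x (concat (map f L)))"
    by (rule free_eq_vl[OF x w]) (use main fe in auto)
  then show ?thesis using main by (blast intro: eqv_trans)
qed

lemma pres_null:
  assumes pres: "is_presentation G S (triangle_relators G S)" and ch: "chain G S L" and cl: "last L = hd L"
  shows "eqv G S L [hd L]"
proof -
  have v: "hd L \<in> carrier G" using ch by (cases L) (auto simp: chain_def)
  have W: "eqv G S (vl G (hd L) (wd G S L)) L" "word_over S (wd G S L)"
    "last L = hd L \<otimes> word_eval G (wd G S L)" using vl_wd[OF ch] by auto
  have "hd L \<otimes> word_eval G (wd G S L) = hd L \<otimes> \<one>" using W(3) cl v by simp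
  then have ev1: "word_eval G (wd G S L) = \<one>" using v W(2) word_eval_carrier l_cancel_one by simp
  have "in_normal_closure S (triangle_relators G S) (wd G S L)" using pres W(2) ev1 by (simp add: is_presentation_def)
  then have "eqv G S (vl G (hd L) (wd G S L)) [hd L]" by (rule nc_eqv[OF v W(2)])
  from eqv_trans[OF eqv_sym[OF W(1)] this] show ?thesis .
qed

end


lemma free_red_inv: "free_red a b \<Longrightarrow> free_red (inv_word a) (inv_word b)"
proof -
  assume "free_red a b"
  then obtain p q x where a: "a = p @ [x, inv_letter x] @ q" and b: "b = p @ q" by (auto simp: free_red_def)
  have "inv_word a = inv_word q @ [x, inv_letter x] @ inv_word p" by (simp add: a)
  then show ?thesis using free_red_I[of "inv_word q" x "inv_word p"] by (simp add: b)
qed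

lemma free_eq_inv: "free_eq a b \<Longrightarrow> free_eq (inv_word a) (inv_word b)"
  unfolding free_eq_def
proof (induction rule: rtranclp_induct)
  case (step y z)
  then show ?case using free_red_inv[of y z] free_red_inv[of z y]
    by (metis (no_types, lifting) rtranclp.rtrancl_into_rtrancl)
qed simp

context fctx
begin

definition relconj :: "'a word \<Rightarrow> bool" where
  "relconj t \<longleftrightarrow> (\<exists>q r e. word_over S q \<and> r \<in> triangle_relators G S \<and>
      free_eq t (q @ (if e then inv_word r else r) @ inv_word q))"

lemma relconj_inv: "relconj (inv_word t) \<Longrightarrow> relconj t"
proof -
  assume "relconj (inv_word t)"
  then obtain q r e where h: "word_over S q" "r \<in> triangle_relators G S"
    "free_eq (inv_word t) (q @ (if e then inv_word r else r) @ inv_word q)" by (auto simp: relconj_def)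
  have "free_eq t (inv_word (q @ (if e then inv_word r else r) @ inv_word q))"
    using free_eq_inv[OF h(3)] by simp
  then have "free_eq t (q @ (if \<not> e then inv_word r else r) @ inv_word q)" by (cases e) simp_all
  then show ?thesis using h(1,2) unfolding relconj_def by blast
qed

lemma relconj_rot: "fst l1 \<in> S \<Longrightarrow> relconj [l2, l3, l1] \<Longrightarrow> relconj [l1, l2, l3]"
proof -
  assume l1: "fst l1 \<in> S" and "relconj [l2, l3, l1]"
  then obtain q r e where h: "word_over S q" "r \<in> triangle_relators G S"
    "free_eq [l2, l3, l1] (q @ (if e then inv_word r else r) @ inv_word q)" by (auto simp: relconj_def)
  have f1: "free_eq ([l1, l2, l3] @ [l1, inv_letter l1] @ []) ([l1, l2, l3] @ [])"
    by (rule free_red_eq[OF free_red_I])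
  have e1: "[l1, l2, l3] @ [l1, inv_letter l1] @ [] = [l1] @ [l2, l3, l1] @ [inv_letter l1]" by simp
  have f1': "free_eq [l1, l2, l3] ([l1] @ [l2, l3, l1] @ [inv_letter l1])"
    using free_eq_sym[OF f1] unfolding e1 by simp
  have f2: "free_eq ([l1] @ [l2, l3, l1] @ [inv_letter l1]) ([l1] @ (q @ (if e then inv_word r else r) @ inv_word q) @ [inv_letter l1])"
    by (rule free_eq_ctx[OF h(3)])
  have e2: "[l1] @ (q @ (if e then inv_word r else r) @ inv_word q) @ [inv_letter l1] =
      (l1 # q) @ (if e then inv_word r else r) @ inv_word (l1 # q)" by simp
  have "free_eq [l1, l2, l3] ((l1 # q) @ (if e then inv_word r else r) @ inv_word (l1 # q))"
    using free_eq_trans[OF f1' f2] unfolding e2 .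
  moreover have "word_over S (l1 # q)" using l1 h(1) by simp
  ultimately show ?thesis using h(2) unfolding relconj_def by blast
qed

lemma rot_eval:
  assumes "fst l1 \<in> S" "fst l2 \<in> S" "fst l3 \<in> S" "word_eval G [l1, l2, l3] = \<one>"
  shows "word_eval G [l2, l3, l1] = \<one>"
proof -
  have c: "ev G l1 \<in> carrier G" "ev G l2 \<in> carrier G" "ev G l3 \<in> carrier G" using assms by (auto simp: ev_carrier)
  have E: "ev G l1 \<otimes> (ev G l2 \<otimes> ev G l3) = \<one>" using assms(4) c by simp
  have "(ev G l2 \<otimes> ev G l3) \<otimes> ev G l1 = \<one>" by (rule inv_comm[OF E]) (use c in auto)
  then show ?thesis using c by (simp add: m_assoc)
qed

lemma inv_eval:
  assumes "word_over S t" "word_eval G t = \<one>"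
  shows "word_eval G (inv_word t) = \<one>"
  using assms by (simp add: word_eval_inv_word)

lemma base_FFF: "a \<in> S \<Longrightarrow> b \<in> S \<Longrightarrow> c \<in> S \<Longrightarrow> word_eval G [(a, False), (b, False), (c, False)] = \<one>
   \<Longrightarrow> relconj [(a, False), (b, False), (c, False)]"
  unfolding relconj_def
  by (rule exI[of _ "[]"], rule exI[of _ "[(a, False), (b, False), (c, False)]"], rule exI[of _ False])
     (auto simp: triangle_relators_def ev_def m_assoc S_carr)

lemma base_FFT: "a \<in> S \<Longrightarrow> b \<in> S \<Longrightarrow> c \<in> S \<Longrightarrow> word_eval G [(a, False), (b, False), (c, True)] = \<one>
   \<Longrightarrow> relconj [(a, False), (b, False), (c, True)]"
  unfolding relconj_def
  by (rule exI[of _ "[]"], rule exI[of _ "[(a, False), (b, False), (c, True)]"], rule exI[of _ False])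
     (auto simp: triangle_relators_def ev_def m_assoc S_carr)

lemma rel3:
  assumes t: "word_over S t" "length t = 3" "word_eval G t = \<one>"
  shows "relconj t"
proof -
  have "\<exists>a sa b sb c sc. t = [(a, sa), (b, sb), (c, sc)]" using t(2) by (auto simp: numeral_3_eq_3 length_Suc_conv)
  then obtain a sa b sb c sc where tt: "t = [(a, sa), (b, sb), (c, sc)]" by blast
  have abc: "a \<in> S" "b \<in> S" "c \<in> S" using t(1) tt by auto
  have E: "word_eval G [(a, sa), (b, sb), (c, sc)] = \<one>" using t(3) tt by simp
  have gen: "\<And>sa sb sc. word_eval G [(a, sa), (b, sb), (c, sc)] = \<one> \<Longrightarrow> relconj [(a, sa), (b, sb), (c, sc)]"
  proof -
    fix sa sb sc assume e: "word_eval G [(a, sa), (b, sb), (c, sc)] = \<one>"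
    have TFF: "\<And>x y z. x \<in> S \<Longrightarrow> y \<in> S \<Longrightarrow> z \<in> S \<Longrightarrow> word_eval G [(x, True), (y, False), (z, False)] = \<one>
       \<Longrightarrow> relconj [(x, True), (y, False), (z, False)]"
    proof -
      fix x y z assume xyz: "x \<in> S" "y \<in> S" "z \<in> S" and e: "word_eval G [(x, True), (y, False), (z, False)] = \<one>"
      have "word_eval G [(y, False), (z, False), (x, True)] = \<one>" using rot_eval[OF _ _ _ e] xyz by simp
      then have "relconj [(y, False), (z, False), (x, True)]" using base_FFT xyz by blast
      then show "relconj [(x, True), (y, False), (z, False)]" using relconj_rot xyz by simp
    qed
    have FTF: "\<And>x y z. x \<in> S \<Longrightarrow> y \<in> S \<Longrightarrow> z \<in> S \<Longrightarrow> word_eval G [(x, False), (y, True), (z, False)] = \<one>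
       \<Longrightarrow> relconj [(x, False), (y, True), (z, False)]"
    proof -
      fix x y z assume xyz: "x \<in> S" "y \<in> S" "z \<in> S" and e: "word_eval G [(x, False), (y, True), (z, False)] = \<one>"
      have "word_eval G [(y, True), (z, False), (x, False)] = \<one>" using rot_eval[OF _ _ _ e] xyz by simp
      then have "relconj [(y, True), (z, False), (x, False)]" using TFF xyz by blast
      then show "relconj [(x, False), (y, True), (z, False)]" using relconj_rot xyz by simp
    qed
    have INV: "\<And>x y z sx sy sz. x \<in> S \<Longrightarrow> y \<in> S \<Longrightarrow> z \<in> S \<Longrightarrow> word_eval G [(x, sx), (y, sy), (z, sz)] = \<one>
       \<Longrightarrow> (word_eval G [(z, \<not> sz), (y, \<not> sy), (x, \<not> sx)] = \<one> \<Longrightarrow> relconj [(z, \<not> sz), (y, \<not> sy), (x, \<not> sx)])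
       \<Longrightarrow> relconj [(x, sx), (y, sy), (z, sz)]"
    proof -
      fix x y z sx sy sz assume xyz: "x \<in> S" "y \<in> S" "z \<in> S" and e: "word_eval G [(x, sx), (y, sy), (z, sz)] = \<one>"
        and h: "word_eval G [(z, \<not> sz), (y, \<not> sy), (x, \<not> sx)] = \<one> \<Longrightarrow> relconj [(z, \<not> sz), (y, \<not> sy), (x, \<not> sx)]"
      have "word_eval G (inv_word [(x, sx), (y, sy), (z, sz)]) = \<one>" by (rule inv_eval) (use xyz e in auto)
      then have "word_eval G [(z, \<not> sz), (y, \<not> sy), (x, \<not> sx)] = \<one>" by (simp add: inv_letter_def)
      then have "relconj (inv_word [(x, sx), (y, sy), (z, sz)])" using h by (simp add: inv_letter_def)
      then show "relconj [(x, sx), (y, sy), (z, sz)]" by (rule relconj_inv)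
    qed
    show "relconj [(a, sa), (b, sb), (c, sc)]"
    proof (cases sa)
      case True
      show ?thesis
      proof (cases sb)
        case sb: True
        show ?thesis
        proof (cases sc)
          case sc: True
          show ?thesis using INV[of a b c True True True] base_FFF[of c b a] abc e True sb sc by simp
        next
          case sc: False
          show ?thesis using INV[of a b c True True False] TFF[of c b a] abc e True sb sc by simp
        qed
      next
        case sb: False
        show ?thesis
        proof (cases sc)
          case sc: True
          show ?thesis using INV[of a b c True False True] FTF[of c b a] abc e True sb sc by simp
        next
          case sc: False
          show ?thesis using TFF[of a b c] abc e True sb sc by simp
        qed
      qed
    next
      case False
      show ?thesis
      proof (cases sb)
        case sb: True
        show ?thesis
        proof (cases sc)
          case sc: True
          show ?thesis using INV[of a b c False True True] base_FFT[of c b a] abc e False sb sc by simp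
        next
          case sc: False
          show ?thesis using FTF[of a b c] abc e False sb sc by simp
        qed
      next
        case sb: False
        show ?thesis
        proof (cases sc)
          case sc: True
          show ?thesis using base_FFT[of a b c] abc e False sb sc by simp
        next
          case sc: False
          show ?thesis using base_FFF[of a b c] abc e False sb sc by simp
        qed
      qed
    qed
  qed
  show ?thesis using gen[OF E] tt by simp
qed

lemma in_nc_free_eq:
  "in_normal_closure S (triangle_relators G S) w \<Longrightarrow> free_eq w w' \<Longrightarrow> in_normal_closure S (triangle_relators G S) w'"
  unfolding in_normal_closure_def by (meson free_eq_sym free_eq_trans)

lemma in_nc_Nil: "in_normal_closure S (triangle_relators G S) []"
  unfolding in_normal_closure_def by (intro exI[of _ "[]"]) simp

lemma IL:
  assumes P: "word_over S P" and Q: "word_over S Q" and t: "word_over S t" "length t = 3" "word_eval G t = \<one>"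
    and nc: "in_normal_closure S (triangle_relators G S) (P @ Q)"
  shows "in_normal_closure S (triangle_relators G S) (P @ t @ Q)"
proof -
  obtain q r e where h: "word_over S q" "r \<in> triangle_relators G S"
    "free_eq t (q @ (if e then inv_word r else r) @ inv_word q)" using rel3[OF t] by (auto simp: relconj_def)
  let ?r = "if e then inv_word r else r"
  define f :: "'a word \<times> 'a word \<times> bool \<Rightarrow> 'a word" where
    "f = (\<lambda>(u, r, e). u @ (if e then inv_word r else r) @ inv_word u)"
  obtain L where L: "\<forall>(u, r, e) \<in> set L. word_over S u \<and> r \<in> triangle_relators G S"
    and fe: "free_eq (P @ Q) (concat (map f L))"
    using nc unfolding in_normal_closure_def f_def by blast
  let ?C = "(P @ q) @ ?r @ inv_word (P @ q)"
  have f1: "free_eq (P @ t @ Q) (P @ (q @ ?r @ inv_word q) @ Q)" by (rule free_eq_ctx[OF h(3)])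
  have f2: "free_eq ((P @ q @ ?r @ inv_word q) @ (inv_word P @ P) @ Q) ((P @ q @ ?r @ inv_word q) @ [] @ Q)"
    by (rule free_eq_ctx[OF cancel_l])
  have f3: "free_eq (?C @ (P @ Q) @ []) (?C @ concat (map f L) @ [])" by (rule free_eq_ctx[OF fe])
  have e2: "(P @ q @ ?r @ inv_word q) @ (inv_word P @ P) @ Q = ?C @ (P @ Q)" by simp
  have e2': "(P @ q @ ?r @ inv_word q) @ [] @ Q = P @ (q @ ?r @ inv_word q) @ Q" by simp
  have f2': "free_eq (?C @ (P @ Q)) (P @ (q @ ?r @ inv_word q) @ Q)" using f2 unfolding e2 e2' .
  have f3': "free_eq (?C @ (P @ Q)) (?C @ concat (map f L))" using f3 by simp
  have X0: "free_eq (P @ t @ Q) (?C @ concat (map f L))"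
    by (rule free_eq_trans[OF f1 free_eq_trans[OF free_eq_sym[OF f2'] f3']])
  have e3: "?C @ concat (map f L) = concat (map f ((P @ q, r, e) # L))" by (simp add: f_def)
  have X: "free_eq (P @ t @ Q) (concat (map f ((P @ q, r, e) # L)))" using X0 unfolding e3 .
  have Lc: "\<forall>(u, r, e) \<in> set ((P @ q, r, e) # L). word_over S u \<and> r \<in> triangle_relators G S"
    using L P h(1,2) by auto
  show ?thesis unfolding in_normal_closure_def using X Lc unfolding f_def by blast
qed

definition ctxeq :: "'a word \<Rightarrow> 'a word \<Rightarrow> bool" where
  "ctxeq w1 w2 \<longleftrightarrow> (\<forall>u v. word_over S u \<longrightarrow> word_over S v \<longrightarrow>
      (in_normal_closure S (triangle_relators G S) (u @ w1 @ v) \<longleftrightarrow> in_normal_closure S (triangle_relators G S) (u @ w2 @ v)))"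

lemma ctxeq_refl[simp]: "ctxeq w w" by (simp add: ctxeq_def)
lemma ctxeq_sym: "ctxeq a b \<Longrightarrow> ctxeq b a" by (simp add: ctxeq_def)
lemma ctxeq_trans: "ctxeq a b \<Longrightarrow> ctxeq b c \<Longrightarrow> ctxeq a c" by (simp add: ctxeq_def)
lemma ctxeq_ctx: "word_over S p \<Longrightarrow> word_over S q \<Longrightarrow> ctxeq a b \<Longrightarrow> ctxeq (p @ a @ q) (p @ b @ q)"
  unfolding ctxeq_def
proof (intro allI impI)
  fix u v assume p: "word_over S p" and q: "word_over S q"
    and h: "\<forall>u v. word_over S u \<longrightarrow> word_over S v \<longrightarrow>
      in_normal_closure S (triangle_relators G S) (u @ a @ v) = in_normal_closure S (triangle_relators G S) (u @ b @ v)"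
    and u: "word_over S u" and v: "word_over S v"
  have up: "word_over S (u @ p)" and qv: "word_over S (q @ v)" using p q u v by simp_all
  have "in_normal_closure S (triangle_relators G S) ((u @ p) @ a @ (q @ v)) = in_normal_closure S (triangle_relators G S) ((u @ p) @ b @ (q @ v))"
    using h[rule_format, OF up qv] .
  then show "in_normal_closure S (triangle_relators G S) (u @ (p @ a @ q) @ v) = in_normal_closure S (triangle_relators G S) (u @ (p @ b @ q) @ v)"
    by simp
qed

lemma free_eq_ctxeq: "free_eq a b \<Longrightarrow> ctxeq a b"
  unfolding ctxeq_def using free_eq_ctx free_eq_sym in_nc_free_eq by blast

lemma lab_tri: "tri G S a b c \<Longrightarrow> ctxeq (lab G S a c) (lab G S a b @ lab G S b c)"
proof -
  assume t: "tri G S a b c"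
  have eab: "ea G S a b" and ebc: "ea G S b c" and eac: "ea G S a c" using t by (auto simp: tri_def)
  have ac: "a \<in> carrier G" "b \<in> carrier G" "c \<in> carrier G" using eab ebc by (auto simp: ea_def)
  show ?thesis
  proof (cases "a = b \<or> b = c")
    case True then show ?thesis by auto
  next
    case False
    then have ab: "a \<noteq> b" and bc: "b \<noteq> c" by auto
    obtain x where x: "lab G S a b = [x]" "fst x \<in> S" "a \<otimes> ev G x = b" using lab_ea[OF eab ab] by blast
    obtain y where y: "lab G S b c = [y]" "fst y \<in> S" "b \<otimes> ev G y = c" using lab_ea[OF ebc bc] by blast
    have ex: "ev G x \<in> carrier G" and ey: "ev G y \<in> carrier G" using x y by (auto simp: ev_carrier)
    show ?thesis
    proof (cases "a = c")
      case True
      have "b \<otimes> inv (ev G x) = a" by (subst x(3)[symmetric]) (simp add: m_assoc ac ex)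
      then have "b \<otimes> ev G (inv_letter x) = a"
        using x S_carr by (simp add: ev_inv_letter)
      then have "lab G S b a = [inv_letter x]" using lab_step[of b "inv_letter x"] ac x by simp
      then have "lab G S a b @ lab G S b c = [] @ [x, inv_letter x] @ []" using x True by simp
      then have "free_eq (lab G S a b @ lab G S b c) (lab G S a c)" using True free_red_eq[OF free_red_I[of "[]" x "[]"]] by simp
      then show ?thesis by (rule ctxeq_sym[OF free_eq_ctxeq])
    next
      case ac': False
      obtain z where z: "lab G S a c = [z]" "fst z \<in> S" "a \<otimes> ev G z = c" using lab_ea[OF eac ac'] by blast
      have ez: "ev G z \<in> carrier G" using z by (simp add: ev_carrier)
      have zxy: "ev G z = ev G x \<otimes> ev G y"
      proof -
        have "a \<otimes> ev G z = a \<otimes> (ev G x \<otimes> ev G y)" using x y z ac ex ey by (simp add: m_assoc[symmetric])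
        then show ?thesis using ac ez ex ey by simp
      qed
      let ?t1 = "[x, y, inv_letter z]" and ?t2 = "[z, inv_letter y, inv_letter x]"
      have c3: "ev G x \<otimes> ev G y \<otimes> inv (ev G y) = ev G x" using ex ey by (simp add: m_assoc)
      have t1: "word_over S ?t1" "length ?t1 = 3" "word_eval G ?t1 = \<one>"
        using x y z ex ey ez S_carr by (simp_all add: ev_inv_letter zxy m_assoc[symmetric])
      have t2: "word_over S ?t2" "length ?t2 = 3" "word_eval G ?t2 = \<one>"
        using x y z ex ey ez S_carr by (simp_all add: ev_inv_letter zxy m_assoc[symmetric] c3)
      have "ctxeq [z] [x, y]"
        unfolding ctxeq_def
      proof (intro allI impI iffI)
        fix u v assume u: "word_over S u" and v: "word_over S v"
        {
          assume h: "in_normal_closure S (triangle_relators G S) (u @ [z] @ v)"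
          have "in_normal_closure S (triangle_relators G S) (u @ ?t1 @ ([z] @ v))"
            by (rule IL[OF u _ t1 h]) (use v z in simp)
          moreover have "free_eq ((u @ [x, y]) @ [inv_letter z, inv_letter (inv_letter z)] @ v) ((u @ [x, y]) @ v)"
            by (rule free_red_eq[OF free_red_I])
          then have "free_eq (u @ ?t1 @ ([z] @ v)) (u @ [x, y] @ v)" by simp
          ultimately show "in_normal_closure S (triangle_relators G S) (u @ [x, y] @ v)"
            by (rule in_nc_free_eq)
        }
        {
          assume h: "in_normal_closure S (triangle_relators G S) (u @ [x, y] @ v)"
          have "in_normal_closure S (triangle_relators G S) (u @ ?t2 @ ([x, y] @ v))"
            by (rule IL[OF u _ t2 h]) (use v x y in simp)
          moreover have "free_eq ((u @ [z, inv_letter y]) @ [inv_letter x, inv_letter (inv_letter x)] @ (y # v)) ((u @ [z, inv_letter y]) @ (y # v))"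
            by (rule free_red_eq[OF free_red_I])
          moreover have "free_eq ((u @ [z]) @ [inv_letter y, inv_letter (inv_letter y)] @ v) ((u @ [z]) @ v)"
            by (rule free_red_eq[OF free_red_I])
          ultimately have "free_eq (u @ ?t2 @ ([x, y] @ v)) (u @ [z] @ v)"
            by (simp add: free_eq_trans)
          with \<open>in_normal_closure S (triangle_relators G S) (u @ ?t2 @ ([x, y] @ v))\<close>
          show "in_normal_closure S (triangle_relators G S) (u @ [z] @ v)"
            by (rule in_nc_free_eq)
        }
      qed
      then show ?thesis using x y z by simp
    qed
  qed
qed

lemma wd3: "M \<noteq> [] \<Longrightarrow> wd G S (pre @ M @ post) =
   (if pre = [] then [] else wd G S pre @ lab G S (last pre) (hd M)) @ wd G S M @
   (if post = [] then [] else lab G S (last M) (hd post) @ wd G S post)"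
proof -
  assume M: "M \<noteq> []"
  have A: "wd G S (M @ post) = wd G S M @ (if post = [] then [] else lab G S (last M) (hd post) @ wd G S post)"
    using wd_append[OF M, of post] by (cases "post = []") auto
  show ?thesis
  proof (cases "pre = []")
    case True then show ?thesis using A by simp
  next
    case False
    then show ?thesis using wd_append[OF False, of "M @ post"] A M by simp
  qed
qed

lemma mv_ctxeq: "mv G S L L' \<Longrightarrow> chain G S L \<Longrightarrow> ctxeq (wd G S L) (wd G S L')"
proof (induction rule: mv.induct)
  case (ins a b c pre post)
  let ?A = "if pre = [] then [] else wd G S pre @ lab G S (last pre) a"
  let ?B = "if post = [] then [] else lab G S c (hd post) @ wd G S post"
  have w1: "wd G S (pre @ [a, c] @ post) = ?A @ lab G S a c @ ?B" using wd3[of "[a, c]" pre post] by simp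
  have w2: "wd G S (pre @ [a, b, c] @ post) = ?A @ (lab G S a b @ lab G S b c) @ ?B"
    using wd3[of "[a, b, c]" pre post] by simp
  have "word_over S (wd G S (pre @ [a, c] @ post))" using vl_wd[OF ins(2)] by simp
  then have AB: "word_over S ?A" "word_over S ?B" unfolding w1 by simp_all
  show ?case unfolding w1 w2 by (rule ctxeq_ctx[OF AB lab_tri[OF ins(1)]])
next
  case (dup a pre post)
  have w1: "wd G S (pre @ [a] @ post) = wd G S (pre @ [a, a] @ post)"
    using wd3[of "[a]" pre post] wd3[of "[a, a]" pre post] by simp
  then show ?case by simp
qed

lemma eqv_ctxeq: "eqv G S L L' \<Longrightarrow> chain G S L \<Longrightarrow> ctxeq (wd G S L) (wd G S L')"
  unfolding eqv_def
proof (induction rule: rtranclp_induct)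
  case (step y z)
  have cy: "chain G S y" using eqv_chain[of G S L y] step unfolding eqv_def by blast
  from step(2) have "ctxeq (wd G S y) (wd G S z)"
  proof
    assume "mv G S y z" then show ?thesis using mv_ctxeq cy by blast
  next
    assume m: "mv G S z y"
    then have "chain G S z" using mv_chain cy by blast
    then show ?thesis using mv_ctxeq[OF m] ctxeq_sym by blast
  qed
  then show ?case using step by (blast intro: ctxeq_trans)
qed simp

lemma A_final:
  assumes w: "word_over S w" and e: "eqv G S (vl G \<one> w) [\<one>]"
  shows "in_normal_closure S (triangle_relators G S) w"
proof -
  have "ctxeq (wd G S (vl G \<one> w)) (wd G S [\<one>])" by (rule eqv_ctxeq[OF e chain_vl[OF one_closed w]])
  then have "ctxeq w []" using wd_vl[OF one_closed w] by simp
  then have "in_normal_closure S (triangle_relators G S) ([] @ w @ []) = in_normal_closure S (triangle_relators G S) ([] @ [] @ [])"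
    unfolding ctxeq_def using word_over_Nil by blast
  then show ?thesis using in_nc_Nil by simp
qed

lemma gen_word: "g \<in> generate G S \<Longrightarrow> \<exists>w. word_over S w \<and> word_eval G w = g"
proof (induction rule: generate.induct)
  case one then show ?case by (intro exI[of _ "[]"]) simp
next
  case (incl h) then show ?case by (intro exI[of _ "[(h, False)]"]) (simp add: ev_def S_carr)
next
  case (inv h) then show ?case by (intro exI[of _ "[(h, True)]"]) (simp add: ev_def S_carr)
next
  case (eng h1 h2)
  then obtain w1 w2 where "word_over S w1" "word_eval G w1 = h1" "word_over S w2" "word_eval G w2 = h2" by blast
  then show ?case by (intro exI[of _ "w1 @ w2"]) (simp add: word_eval_append)
qed

end


lemma tri_perm:
  assumes "tri G S a b c"
  shows "tri G S b a c" "tri G S a c b" "tri G S c b a" "tri G S b c a" "tri G S c a b"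
  using assms by (auto simp: tri_def intro: ea_sym)

lemma tri_aba: "ea G S a b \<Longrightarrow> tri G S a b a"
  by (auto simp: tri_def intro: ea_sym ea_refl dest: ea_carrier)

lemma eqv_mv_sym: "mv G S L L' \<Longrightarrow> eqv G S L' L"
  by (rule eqv_sym[OF mv_eqv])

lemma replace_eqv:
  assumes "0 < j" "Suc j < length L" "tri G S (L!(j-1)) (L!j) b" "tri G S (L!j) b (L!Suc j)"
  shows "eqv G S L (L[j := b])"
proof -
  let ?pre = "take (j - 1) L" and ?post = "drop (Suc (Suc j)) L"
  let ?x = "L!(j-1)" and ?a = "L!j" and ?y = "L!Suc j"
  have jl: "j < length L" using assms(2) by simp
  have d1: "drop j L = L!j # drop (Suc j) L" using Cons_nth_drop_Suc[OF jl] by simp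
  have d2: "drop (Suc j) L = L!Suc j # drop (Suc (Suc j)) L" using Cons_nth_drop_Suc[OF assms(2)] by simp
  have tk: "take j L = take (j - 1) L @ [L!(j-1)]"
    using take_Suc_conv_app_nth[of "j - 1" L] assms(1,2) by simp
  have L: "L = ?pre @ [?x, ?a, ?y] @ ?post"
    using append_take_drop_id[of j L] d1 d2 tk by simp
  have L': "L[j := b] = ?pre @ [?x, b, ?y] @ ?post"
    using upd_conv_take_nth_drop[OF jl, of b] d2 tk by simp
  have t1: "tri G S ?x ?a b" and t2: "tri G S ?a b ?y" using assms(3,4) by auto
  have eab: "ea G S ?a b" and ac: "?a \<in> carrier G" using t1 by (auto simp: tri_def dest: ea_carrier)
  have m1: "mv G S ([?x] @ [?a] @ [?y]) ([?x] @ [?a, ?a] @ [?y])" by (rule mv.dup[OF ac])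
  have m2: "mv G S ([?x] @ [?a, ?a] @ [?y]) ([?x] @ [?a, b, ?a] @ [?y])" by (rule mv.ins[OF tri_aba[OF eab]])
  have m3: "mv G S ([] @ [?x, b] @ [?a, ?y]) ([] @ [?x, ?a, b] @ [?a, ?y])" by (rule mv.ins[OF t1])
  have m4: "mv G S ([?x] @ [b, ?y] @ []) ([?x] @ [b, ?a, ?y] @ [])" by (rule mv.ins[OF tri_perm(1)[OF t2]])
  have "eqv G S [?x, ?a, ?y] [?x, b, ?y]"
  proof -
    have "eqv G S [?x, ?a, ?y] [?x, ?a, ?a, ?y]" using mv_eqv[OF m1] by simp
    moreover have "eqv G S [?x, ?a, ?a, ?y] [?x, ?a, b, ?a, ?y]" using mv_eqv[OF m2] by simp
    moreover have "eqv G S [?x, ?a, b, ?a, ?y] [?x, b, ?a, ?y]" using eqv_mv_sym[OF m3] by simp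
    moreover have "eqv G S [?x, b, ?a, ?y] [?x, b, ?y]" using eqv_mv_sym[OF m4] by simp
    ultimately show ?thesis by (blast intro: eqv_trans)
  qed
  then have "eqv G S (?pre @ [?x, ?a, ?y] @ ?post) (?pre @ [?x, b, ?y] @ ?post)" by (rule eqv_ctx)
  then show ?thesis using L L' by simp
qed

lemma cyc_eqv:
  assumes null: "eqv G S ([a] @ mid @ [a]) [a]" and ne: "mid \<noteq> []"
    and t1: "tri G S (last mid) a b" and t2: "tri G S a b (hd mid)"
  shows "eqv G S ([b] @ mid @ [b]) [b]"
proof -
  obtain y mid1 where m1: "mid = y # mid1" using ne by (cases mid) auto
  obtain mid2 x where m2: "mid = mid2 @ [x]" using ne by (cases mid rule: rev_cases) auto
  have tx: "tri G S x a b" using t1 m2 by simp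
  have ty: "tri G S b a y" using tri_perm(1)[OF t2] m1 by simp
  have s1: "mv G S ([] @ [b, y] @ (mid1 @ [b])) ([] @ [b, a, y] @ (mid1 @ [b]))" by (rule mv.ins[OF ty])
  have s2: "mv G S (([b, a] @ mid2) @ [x, b] @ []) (([b, a] @ mid2) @ [x, a, b] @ [])" by (rule mv.ins[OF tx])
  have e1: "eqv G S ([b] @ mid @ [b]) ([b, a] @ mid @ [b])" using mv_eqv[OF s1] m1 by simp
  have e2: "eqv G S ([b, a] @ mid @ [b]) ([b] @ ([a] @ mid @ [a]) @ [b])" using mv_eqv[OF s2] m2 by simp
  have e3: "eqv G S ([b] @ ([a] @ mid @ [a]) @ [b]) ([b] @ [a] @ [b])" by (rule eqv_ctx[OF null])
  have eab0: "ea G S a b" using t1 by (simp add: tri_def)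
  have eb: "ea G S b a" and bc: "b \<in> carrier G" using ea_sym[OF eab0] ea_carrier(2)[OF eab0] by auto
  have s3: "mv G S ([] @ [b, b] @ []) ([] @ [b, a, b] @ [])" by (rule mv.ins[OF tri_aba[OF eb]])
  have s4: "mv G S ([] @ [b] @ []) ([] @ [b, b] @ [])" by (rule mv.dup[OF bc])
  have e4: "eqv G S ([b] @ [a] @ [b]) [b]"
    using eqv_trans[OF eqv_mv_sym[OF s3] eqv_mv_sym[OF s4]] by simp
  show ?thesis using e1 e2 e3 e4 by (blast intro: eqv_trans)
qed

lemma replicate_eqv: "c \<in> carrier G \<Longrightarrow> eqv G S (replicate (Suc n) c) [c]"
proof (induction n)
  case (Suc n)
  have m: "mv G S ([] @ [c] @ replicate n c) ([] @ [c, c] @ replicate n c)" by (rule mv.dup[OF Suc(2)])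
  have "eqv G S (replicate (Suc (Suc n)) c) (replicate (Suc n) c)" using eqv_mv_sym[OF m] by simp
  then show ?case using Suc by (blast intro: eqv_trans)
qed simp

lemma two_val:
  assumes e: "ea G S a b" and Y: "set Y \<subseteq> {a, b}" and c: "c \<in> {a, b}"
  shows "eqv G S (c # Y @ [b]) [c, b]"
  using Y c
proof (induction Y arbitrary: c)
  case (Cons d Y)
  have IH: "eqv G S (d # Y @ [b]) [d, b]" using Cons by simp
  have "eqv G S ([c] @ (d # Y @ [b]) @ []) ([c] @ [d, b] @ [])" by (rule eqv_ctx[OF IH])
  then have A: "eqv G S (c # d # Y @ [b]) [c, d, b]" by simp
  have ac: "a \<in> carrier G" "b \<in> carrier G" using e by (auto dest: ea_carrier)
  have eba: "ea G S b a" using ea_sym[OF e] .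
  have dd: "d \<in> {a, b}" using Cons(2) by simp
  have "tri G S c d b" unfolding tri_def using Cons(3) dd e eba ac by (auto intro: ea_refl)
  then have "mv G S ([] @ [c, b] @ []) ([] @ [c, d, b] @ [])" by (rule mv.ins)
  then have B: "eqv G S [c, d, b] [c, b]" using eqv_mv_sym by fastforce
  show ?case using eqv_trans[OF A B] by simp
qed simp

lemma blocks_eqv:
  assumes "length V = Suc m" "chain G S V" "length X = m * K" "0 < K"
    "\<forall>j < m * K. X!j = V!(j div K) \<or> X!j = V!(Suc (j div K))"
    "\<forall>k < m. X!(k * K) = V!k"
  shows "eqv G S (X @ [V!m]) V"
  using assms
proof (induction m arbitrary: V X)
  case 0
  then obtain v where "V = [v]" by (cases V) auto
  then show ?case using 0 by simp
next
  case (Suc m)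
  obtain v0 V' where V: "V = v0 # V'" using Suc(2) by (cases V) auto
  have lV': "length V' = Suc m" using Suc(2) V by simp
  obtain v1 V'' where V': "V' = v1 # V''" using lV' by (cases V') auto
  have cV': "chain G S V'" using Suc(3) V V' by simp
  have e01: "ea G S v0 v1" using Suc(3) V V' by simp
  let ?X1 = "take K X" and ?X2 = "drop K X"
  have lX2: "length ?X2 = m * K" using Suc(4) by simp
  have h5: "\<forall>j < m * K. ?X2!j = V'!(j div K) \<or> ?X2!j = V'!(Suc (j div K))"
  proof (intro allI impI)
    fix j assume j: "j < m * K"
    have "j + K < Suc m * K" using j by simp
    then have "X!(j + K) = V!((j + K) div K) \<or> X!(j + K) = V!(Suc ((j + K) div K))" using Suc(6) by blast
    moreover have "(j + K) div K = Suc (j div K)" using Suc(5) by simp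
    ultimately show "?X2!j = V'!(j div K) \<or> ?X2!j = V'!(Suc (j div K))"
      using Suc(4) V by (simp add: add.commute)
  qed
  have h6: "\<forall>k < m. ?X2!(k * K) = V'!k"
  proof (intro allI impI)
    fix k assume k: "k < m"
    have "X!(Suc k * K) = V!(Suc k)" using Suc(7)[rule_format, of "Suc k"] k by simp
    then show "?X2!(k * K) = V'!k" using Suc(4) V by (simp add: add.commute)
  qed
  have IH: "eqv G S (?X2 @ [V'!m]) V'" by (rule Suc.IH[OF lV' cV' lX2 Suc(5) h5 h6])
  have X: "X = ?X1 @ ?X2" by simp
  have l1: "length ?X1 = K" using Suc(4) by simp
  have hd1: "?X1 ! 0 = v0" using Suc(7)[rule_format, of 0] Suc(5) V by simp
  obtain Y where Y: "?X1 = v0 # Y" using l1 hd1 Suc(5) by (cases ?X1) auto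
  have setY: "set Y \<subseteq> {v0, v1}"
  proof
    fix z assume z: "z \<in> set Y"
    then obtain i where i: "i < length Y" "Y!i = z" by (auto simp: in_set_conv_nth)
    have lY: "Suc (length Y) = K" using Y l1 by (metis length_Cons)
    have iK: "Suc i < K" using i lY by simp
    have lt: "Suc i < Suc m * K" using iK by simp
    have dv: "Suc i div K = 0" using iK by simp
    have "X!(Suc i) = V!0 \<or> X!(Suc i) = V!1" using Suc(6)[rule_format, OF lt] dv by simp
    moreover have "?X1 ! Suc i = X ! Suc i" using iK by simp
    then have "X!(Suc i) = z" using Y i by simp
    ultimately show "z \<in> {v0, v1}" using V V' by auto
  qed
  have tv: "eqv G S (v0 # Y @ [v1]) [v0, v1]" by (rule two_val[OF e01 setY]) simp
  have "eqv G S ([] @ (v0 # Y @ [v1]) @ V'') ([] @ [v0, v1] @ V'')" by (rule eqv_ctx[OF tv])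
  then have A: "eqv G S (?X1 @ V') V" using Y V V' by simp
  have "eqv G S (?X1 @ (?X2 @ [V'!m]) @ []) (?X1 @ V' @ [])" by (rule eqv_ctx[OF IH])
  then have B: "eqv G S (X @ [V!Suc m]) (?X1 @ V')" using V by (simp add: append_assoc[symmetric] del: append_assoc)
  show ?case using eqv_trans[OF B A] .
qed

context fctx
begin

lemma free_red_eval: "word_over S u \<Longrightarrow> free_red u v \<Longrightarrow> word_eval G u = word_eval G v"
proof -
  assume u: "word_over S u" and "free_red u v"
  then obtain p q l where uu: "u = p @ [l, inv_letter l] @ q" and vv: "v = p @ q" by (auto simp: free_red_def)
  have p: "word_over S p" and l: "fst l \<in> S" and q: "word_over S q" using u uu by auto
  have c: "ev G l \<in> carrier G" "word_eval G q \<in> carrier G" using l q by (auto simp: ev_carrier word_eval_carrier)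
  have "word_eval G ([l, inv_letter l] @ q) = word_eval G q"
    using c l S_carr by (simp add: ev_inv_letter m_assoc[symmetric])
  then show ?thesis using p q l uu vv by (simp add: word_eval_append)
qed

lemma free_eq_eval:
  assumes w: "word_over S w" and w': "word_over S w'" and fe: "free_eq w w'"
  shows "word_eval G w = word_eval G w'"
proof -
  have "word_eval G (filt S w) = word_eval G (filt S w')"
    using fe unfolding free_eq_def
  proof (induction rule: rtranclp_induct)
    case (step y z)
    have fy: "word_over S (filt S y)" and fz: "word_over S (filt S z)" by (rule filt_over)+
    from step(2) have "word_eval G (filt S y) = word_eval G (filt S z)"
    proof
      assume "free_red y z"
      then have "free_red (filt S y) (filt S z) \<or> filt S y = filt S z" by (rule free_red_filt)
      then show ?thesis using free_red_eval[OF fy] by auto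
    next
      assume "free_red z y"
      then have "free_red (filt S z) (filt S y) \<or> filt S z = filt S y" by (rule free_red_filt)
      then show ?thesis using free_red_eval[OF fz] by auto
    qed
    then show ?case using step(3) by simp
  qed simp
  then show ?thesis using filt_id[OF w] filt_id[OF w'] by simp
qed

lemma nc_eval:
  assumes w: "word_over S w" and nc: "in_normal_closure S (triangle_relators G S) w"
  shows "word_eval G w = \<one>"
proof -
  define f :: "'a word \<times> 'a word \<times> bool \<Rightarrow> 'a word" where
    "f = (\<lambda>(u, r, e). u @ (if e then inv_word r else r) @ inv_word u)"
  obtain L where L: "\<forall>(u, r, e) \<in> set L. word_over S u \<and> r \<in> triangle_relators G S"
    and fe: "free_eq w (concat (map f L))"
    using nc unfolding in_normal_closure_def f_def by blast
  have main: "word_over S (concat (map f L)) \<and> word_eval G (concat (map f L)) = \<one>" using L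
  proof (induction L)
    case (Cons a L)
    obtain u r e where a: "a = (u, r, e)" by (cases a) auto
    have u: "word_over S u" and rR: "r \<in> triangle_relators G S" using Cons(2) a by auto
    have IH: "word_over S (concat (map f L))" "word_eval G (concat (map f L)) = \<one>" using Cons by auto
    let ?r = "if e then inv_word r else r"
    have rp: "word_over S r" "word_eval G r = \<one>" using rel_props[OF rR] by auto
    have r': "word_over S ?r" "word_eval G ?r = \<one>" using rp by (auto simp: word_eval_inv_word)
    have cu: "word_eval G u \<in> carrier G" using u by (simp add: word_eval_carrier)
    have iu: "word_eval G (inv_word u) = inv (word_eval G u)" by (rule word_eval_inv_word[OF u])
    have "word_eval G (u @ ?r @ inv_word u) = word_eval G u \<otimes> (word_eval G ?r \<otimes> word_eval G (inv_word u))"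
      using u r'(1) by (simp add: word_eval_append)
    also have "\<dots> = \<one>" using r'(2) iu cu by simp
    finally have p1: "word_eval G (u @ ?r @ inv_word u) = \<one>" .
    have cc: "concat (map f (a # L)) = (u @ ?r @ inv_word u) @ concat (map f L)" by (simp add: a f_def)
    have ov: "word_over S (u @ ?r @ inv_word u)" using u r'(1) by simp
    show ?case unfolding cc using IH ov p1 word_eval_append[OF ov IH(1)] by simp
  qed simp
  show ?thesis using free_eq_eval[OF w _ fe] main by simp
qed

end


lemma pos_supp: "f \<in> flag_realization G S \<Longrightarrow> 0 < f v \<longleftrightarrow> v \<in> supp f"
  using realization_D[of f G S] by (auto simp: supp_def less_le)

lemma supp_tri: "f \<in> flag_realization G S \<Longrightarrow> a \<in> supp f \<Longrightarrow> b \<in> supp f \<Longrightarrow> c \<in> supp f \<Longrightarrow> tri G S a b c"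
  by (auto simp: tri_def intro: realization_ea)

lemma supp_carrier: "f \<in> flag_realization G S \<Longrightarrow> a \<in> supp f \<Longrightarrow> a \<in> carrier G"
  using realization_ea[of f G S a a] by (auto dest: ea_carrier)

lemma coord_open:
  fixes f :: "'x::topological_space \<Rightarrow> 'a \<Rightarrow> real"
  assumes "continuous_on T f"
  shows "\<exists>U. open U \<and> U \<inter> T = {x \<in> T. 0 < f x v}"
proof -
  have c: "continuous_on T (\<lambda>x. f x v)" by (rule cont_coord_on[OF assms])
  have h: "\<forall>B. open B \<longrightarrow> (\<exists>A. open A \<and> A \<inter> T = (\<lambda>x. f x v) -` B \<inter> T)"
    using c by (simp only: continuous_on_open_invariant)
  have "\<exists>A. open A \<and> A \<inter> T = (\<lambda>x. f x v) -` {0<..} \<inter> T"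
    using h[rule_format, OF open_greaterThan[of "0::real"]] .
  then obtain U where "open U" "U \<inter> T = (\<lambda>x. f x v) -` {0<..} \<inter> T" by blast
  then show ?thesis by (intro exI[of _ U]) auto
qed

lemma loop_to_edge:
  assumes p: "path p" "path_image p \<subseteq> flag_realization G S" "pathfinish p = pathstart p"
  shows "\<exists>L. chain G S L \<and> last L = hd L \<and> homotopic_loops (flag_realization G S) p (epath L)"
proof -
  let ?X = "flag_realization G S"
  have pX: "\<And>t. t \<in> {0..1} \<Longrightarrow> p t \<in> ?X" using p(2) by (auto simp: path_image_def)
  have p10: "p 1 = p 0" using p(3) by (simp add: pathstart_def pathfinish_def)
  obtain v0 where v0: "0 < p 0 v0"
    using realization_supp_ne[OF pX[of 0]] pos_supp[OF pX[of 0]] by auto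
  have "\<forall>v. \<exists>U. open U \<and> U \<inter> {0..1} = {x \<in> {0..1}. 0 < p x v}"
    using coord_open[of "{0..1}" p] p(1) unfolding path_def by blast
  then obtain A where A0: "\<forall>v. open (A v) \<and> A v \<inter> {0..1} = {x \<in> {0..1}. 0 < p x v}"
    using choice[OF \<open>\<forall>v. \<exists>U. open U \<and> U \<inter> {0..1} = {x \<in> {0..1}. 0 < p x v}\<close>] by blast
  have A: "\<And>v. open (A v)" "\<And>v. A v \<inter> {0..1} = {x \<in> {0..1}. 0 < p x v}" using A0 by auto
  have inA: "\<And>t v. t \<in> {0..1} \<Longrightarrow> t \<in> A v \<Longrightarrow> 0 < p t v"
    using A(2) by blast
  have Ain: "\<And>t v. t \<in> {0..1} \<Longrightarrow> 0 < p t v \<Longrightarrow> t \<in> A v"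
    using A(2) by blast
  have cover: "{0..1} \<subseteq> \<Union> (range A)"
  proof
    fix t :: real assume t: "t \<in> {0..1}"
    obtain v where "v \<in> supp (p t)" using realization_supp_ne[OF pX[OF t]] by auto
    then have "0 < p t v" using pos_supp[OF pX[OF t]] by simp
    then show "t \<in> \<Union> (range A)" using Ain[OF t] by blast
  qed
  obtain e where e: "0 < e" "\<And>x. x \<in> {0..1} \<Longrightarrow> \<exists>U \<in> range A. ball x e \<subseteq> U"
    using Heine_Borel_lemma[OF compact_Icc cover] A(1) by blast
  have "0 \<in> A v0" using Ain[of 0 v0] v0 by simp
  then obtain d0 where d0: "0 < d0" "ball 0 d0 \<subseteq> A v0" using A(1) open_contains_ball by blast
  have "1 \<in> A v0" using Ain[of 1 v0] v0 p10 by simp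
  then obtain d1 where d1: "0 < d1" "ball 1 d1 \<subseteq> A v0" using A(1) open_contains_ball by blast
  define N :: nat where "N = nat \<lceil>3 / e + 2 / d0 + 2 / d1\<rceil> + 2"
  have pe: "0 < 3 / e" "0 < 2 / d0" "0 < 2 / d1" using e d0 d1 by auto
  have Nr: "3 / e + 2 / d0 + 2 / d1 + 2 \<le> real N" unfolding N_def by linarith
  have N2: "2 \<le> N" unfolding N_def by simp
  have Np: "0 < real N" using N2 by simp
  have ne: "3 / real N < e"
  proof -
    have "3 / e < real N" using Nr pe by linarith
    then have "3 < real N * e" using e by (simp add: divide_less_eq)
    then show ?thesis using Np by (simp add: divide_less_eq mult.commute)
  qed
  have nd0: "2 / real N < d0"
  proof -
    have "2 / d0 < real N" using Nr pe by linarith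
    then have "2 < real N * d0" using d0 by (simp add: divide_less_eq)
    then show ?thesis using Np by (simp add: divide_less_eq mult.commute)
  qed
  have nd1: "2 / real N < d1"
  proof -
    have "2 / d1 < real N" using Nr pe by linarith
    then have "2 < real N * d1" using d1 by (simp add: divide_less_eq)
    then show ?thesis using Np by (simp add: divide_less_eq mult.commute)
  qed
  have "\<forall>k. \<exists>v. k < N \<longrightarrow> ball ((real k + 1/2) / real N) e \<subseteq> A v"
  proof
    fix k
    show "\<exists>v. k < N \<longrightarrow> ball ((real k + 1/2) / real N) e \<subseteq> A v"
    proof (cases "k < N")
      case True
      have "(real k + 1/2) / real N \<in> {0..1}" using True Np by (auto simp: divide_le_eq)
      then obtain U where "U \<in> range A" "ball ((real k + 1/2) / real N) e \<subseteq> U" using e(2) by blast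
      then show ?thesis by auto
    qed simp
  qed
  then have "\<exists>W. \<forall>k. k < N \<longrightarrow> ball ((real k + 1/2) / real N) e \<subseteq> A (W k)" by (rule choice)
  then obtain W where W0: "\<forall>k. k < N \<longrightarrow> ball ((real k + 1/2) / real N) e \<subseteq> A (W k)" by blast
  have W: "\<And>k. k < N \<Longrightarrow> ball ((real k + 1/2) / real N) e \<subseteq> A (W k)" using W0 by blast
  define w where "w k = (if k = 0 then v0 else W k)" for k
  have Pw: "0 < p t (w k)" if k: "k < N" and t: "t \<in> {0..1}" and l1: "real k - 1 \<le> t * real N"
    and l2: "t * real N \<le> real k + 2" for k t
  proof (cases "k = 0")
    case True
    have "t \<le> 2 / real N" using l2 True Np by (simp add: le_divide_eq)
    then have "t \<in> ball 0 d0" using t nd0 by (auto simp: dist_real_def)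
    then show ?thesis using inA[OF t] d0(2) True by (auto simp: w_def)
  next
    case False
    have "\<bar>t - (real k + 1/2) / real N\<bar> \<le> 3 / (2 * real N)"
    proof -
      have h1: "\<bar>t * real N - (real k + 1/2)\<bar> \<le> 3/2" using l1 l2 by linarith
      have h3: "\<bar>t * real N - (real k + 1/2)\<bar> / real N \<le> (3/2) / real N"
        by (rule divide_right_mono[OF h1]) (use Np in simp)
      have h4: "(t * real N - (real k + 1/2)) / real N = t - (real k + 1/2) / real N"
        using Np by (simp add: diff_divide_distrib)
      have h5: "\<bar>(t * real N - (real k + 1/2)) / real N\<bar> = \<bar>t * real N - (real k + 1/2)\<bar> / real N"
        using Np by (simp add: abs_divide)
      have "\<bar>t - (real k + 1/2) / real N\<bar> \<le> (3/2) / real N" using h3 h4 h5 by simp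
      then show ?thesis by simp
    qed
    moreover have "3 / (2 * real N) < e" using ne Np by (simp add: field_simps)
    ultimately have "t \<in> ball ((real k + 1/2) / real N) e" by (simp add: dist_real_def abs_minus_commute)
    then show ?thesis using inA[OF t] W[OF k] False by (auto simp: w_def)
  qed
  have Pend: "0 < p t v0" if t: "t \<in> {0..1}" and l: "real N - 1 \<le> t * real N" for t
  proof -
    have "1 - t \<le> 1 / real N"
    proof -
      have "(1 - t) * real N \<le> 1" using l by (simp add: algebra_simps)
      then show ?thesis using Np by (simp add: le_divide_eq)
    qed
    then have "t \<in> ball 1 d1" using t nd1 by (auto simp: dist_real_def)
    then show ?thesis using inA[OF t] d1(2) by auto
  qed
  define L where "L = map (\<lambda>k. w (k mod N)) [0..<Suc N]"
  have lL: "length L = Suc N" by (simp add: L_def del: upt_Suc)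
  have Lnth: "L ! j = w (j mod N)" if "j \<le> N" for j
  proof -
    have jl: "j < length [0..<Suc N]" using that by (simp del: upt_Suc)
    have "L ! j = w (([0..<Suc N] ! j) mod N)" unfolding L_def by (rule nth_map[OF jl])
    moreover have "[0..<Suc N] ! j = j" using that by (simp del: upt_Suc add: nth_upt)
    ultimately show ?thesis by simp
  qed
  have Lne: "L \<noteq> []" using lL by auto
  have Lj: "L ! j = w j" if "j < N" for j using Lnth[of j] that by simp
  have LN: "L ! N = v0" using Lnth[of N] by (simp add: w_def)
  have L0: "L ! 0 = v0" using Lj[of 0] N2 by (simp add: w_def)
  have hdL: "hd L = v0" using L0 Lne by (simp add: hd_conv_nth)
  have lastL: "last L = v0" using LN Lne lL by (simp add: last_conv_nth)
  have Key: "0 < p t (L!j) \<and> 0 < p t (L!Suc j)"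
    if j: "j < N" and t: "t \<in> {0..1}" and l1: "real j \<le> t * real N" and l2: "t * real N \<le> real j + 1" for j t
  proof
    have "0 < p t (w j)" by (rule Pw[OF j t]) (use l1 l2 in linarith)+
    then show "0 < p t (L!j)" using Lj[OF j] by simp
    show "0 < p t (L!Suc j)"
    proof (cases "Suc j < N")
      case True
      have "0 < p t (w (Suc j))" by (rule Pw[OF True t]) (use l1 l2 in \<open>simp_all add: of_nat_Suc\<close>)
      then show ?thesis using Lj[OF True] by simp
    next
      case False
      then have sj: "Suc j = N" using j by simp
      have "0 < p t v0" by (rule Pend[OF t]) (use l1 sj in \<open>simp add: of_nat_Suc[symmetric]\<close>)
      then show ?thesis using LN sj by simp
    qed
  qed
  have mid: "(real j + 1/2) / real N \<in> {0..1}" and midl: "real j \<le> (real j + 1/2) / real N * real N"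
    "(real j + 1/2) / real N * real N \<le> real j + 1" if "j < N" for j
    using that Np by (auto simp: divide_le_eq)
  have eaL: "ea G S (L!i) (L!Suc i)" if i: "i < N" for i
  proof -
    let ?t = "(real i + 1/2) / real N"
    have "0 < p ?t (L!i) \<and> 0 < p ?t (L!Suc i)" by (rule Key[OF i mid[OF i] midl[OF i]])
    then show ?thesis using pos_supp[OF pX[OF mid[OF i]]] realization_ea[OF pX[OF mid[OF i]]] by auto
  qed
  have chL: "chain G S L" unfolding chain_def
  proof (intro conjI allI impI)
    show "L \<noteq> []" using lL by auto
    show "set L \<subseteq> carrier G"
    proof
      fix x assume "x \<in> set L"
      then obtain i where i: "i < Suc N" "L!i = x" using lL by (auto simp: in_set_conv_nth)
      show "x \<in> carrier G"
      proof (cases "i < N")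
        case True then show ?thesis using eaL[OF True] i by (auto dest: ea_carrier)
      next
        case False
        then have "i = N" using i by simp
        then have "x = L!0" using LN L0 i by simp
        then show ?thesis using eaL[of 0] N2 by (auto dest: ea_carrier)
      qed
    qed
    fix i assume "Suc i < length L"
    then show "ea G S (L!i) (L!Suc i)" using eaL lL by simp
  qed
  have compat: "flag_simplex G S (supp (p t) \<union> supp (epath L t))" if t: "t \<in> {0..1}" for t
  proof -
    have x0: "0 \<le> t * real N" "t * real N \<le> real N" using t Np by (auto simp: mult_left_le_one_le)
    obtain j where j: "j < N" "real j \<le> t * real N" "t * real N \<le> real j + 1"
      using block_exists[OF x0] N2 by auto
    have lm: "length L - 1 = N" using lL by simp
    obtain s where s: "epath L t = seg (L!j) (L!Suc j) s"
      using epath_seg[of j L t] j lm by auto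
    have "supp (epath L t) \<subseteq> {L!j, L!Suc j}" unfolding s by (rule supp_seg)
    also have "\<dots> \<subseteq> supp (p t)" using Key[OF j(1) t j(2,3)] pos_supp[OF pX[OF t]] by auto
    finally have "supp (p t) \<union> supp (epath L t) = supp (p t)" by auto
    then show ?thesis using realization_D[OF pX[OF t]] by simp
  qed
  have "homotopic_loops ?X p (epath L)"
  proof (rule SL_loops[OF p(1) path_epath p(2) epath_image[OF chL] p(3)])
    show "pathfinish (epath L) = pathstart (epath L)"
      using chL hdL lastL by (simp add: epath_pathstart epath_pathfinish chain_def)
    fix t :: real assume "t \<in> {0..1}" then show "flag_simplex G S (supp (p t) \<union> supp (epath L t))" by (rule compat)
  qed
  then show ?thesis using chL hdL lastL by auto
qed

context fctx
begin

lemma const_loops: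
  assumes gen: "generate G S = carrier G" and v: "v \<in> carrier G" and u: "u \<in> carrier G"
  shows "homotopic_loops (flag_realization G S) (\<lambda>t. dl v) (\<lambda>t. dl u)"
proof -
  obtain w where w: "word_over S w" "word_eval G w = inv v \<otimes> u"
    using gen_word[of "inv v \<otimes> u"] gen v u by auto
  let ?M = "vl G v w"
  have ch: "chain G S ?M" by (rule chain_vl[OF v w(1)])
  have lM: "last ?M = u" using vl_last[OF v w(1)] w(2) v u by (simp add: m_assoc[symmetric])
  define h where "h = (\<lambda>y::real \<times> real. epath ?M (fst y))"
  have c1: "continuous_on ({0..1} \<times> {0..1}) h" unfolding h_def
    by (rule continuous_on_compose2[OF epath_cont continuous_on_fst[OF continuous_on_id]]) simp
  have c2: "h \<in> ({0..1} \<times> {0..1}) \<rightarrow> flag_realization G S"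
  proof (rule funcsetI)
    fix y :: "real \<times> real" assume "y \<in> {0..1} \<times> {0..1}"
    then show "h y \<in> flag_realization G S" unfolding h_def using epath_in[OF ch, of "fst y"] by auto
  qed
  have c3: "\<forall>x\<in>{0..1}. h (0, x) = dl v" unfolding h_def using epath_start[of ?M 0] by simp
  have c4: "\<forall>x\<in>{0..1}. h (1, x) = dl u" unfolding h_def using epath_end[of ?M 1] lM by simp
  have c5: "\<forall>t\<in>{0..1}. pathfinish (h \<circ> Pair t) = pathstart (h \<circ> Pair t)"
    unfolding h_def by (simp add: pathstart_def pathfinish_def)
  show ?thesis unfolding homotopic_loops using c1 c2 c3 c4 c5 by blast
qed

lemma loop_null:
  assumes gen: "generate G S = carrier G" and pres: "is_presentation G S (triangle_relators G S)"
    and p: "path p" "path_image p \<subseteq> flag_realization G S" "pathfinish p = pathstart p"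
  shows "homotopic_loops (flag_realization G S) p (\<lambda>t. dl \<one>)"
proof -
  let ?X = "flag_realization G S"
  obtain L where L: "chain G S L" "last L = hd L" "homotopic_loops ?X p (epath L)"
    using loop_to_edge[OF p] by blast
  have v: "hd L \<in> carrier G" using L(1) by (cases L) (auto simp: chain_def)
  have "eqv G S L [hd L]" by (rule pres_null[OF pres L(1,2)])
  then have "homotopic_paths ?X (epath L) (epath [hd L])" using eqv_hom L(1) by blast
  moreover have "epath [hd L] = (\<lambda>t. dl (hd L))" by (rule ext) simp
  ultimately have hp: "homotopic_paths ?X (epath L) (\<lambda>t. dl (hd L))" by simp
  have ne: "L \<noteq> []" using L(1) by (simp add: chain_def)
  have "homotopic_loops ?X (epath L) (\<lambda>t. dl (hd L))"
    by (rule homotopic_paths_imp_homotopic_loops[OF hp])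
       (use L(2) ne epath_start[of L 0] epath_end[of L 1] in \<open>simp_all add: pathstart_def pathfinish_def\<close>)
  then have "homotopic_loops ?X p (\<lambda>t. dl (hd L))" by (rule homotopic_loops_trans[OF L(3)])
  then show ?thesis by (rule homotopic_loops_trans[OF _ const_loops[OF gen v one_closed]])
qed

end


lemma cell_bound:
  assumes N: "0 < (N::real)" and l1: "real i \<le> x * N" and l2: "x * N \<le> real i + 1"
  shows "\<bar>x - (real i + 1/2) / N\<bar> \<le> 1 / (2 * N)"
proof -
  have h1: "\<bar>x * N - (real i + 1/2)\<bar> \<le> 1/2" using l1 l2 by linarith
  have h3: "\<bar>x * N - (real i + 1/2)\<bar> / N \<le> (1/2) / N" by (rule divide_right_mono[OF h1]) (use N in simp)
  have h4: "(x * N - (real i + 1/2)) / N = x - (real i + 1/2) / N" using N by (simp add: diff_divide_distrib)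
  have h5: "\<bar>(x * N - (real i + 1/2)) / N\<bar> = \<bar>x * N - (real i + 1/2)\<bar> / N" using N by (simp add: abs_divide)
  have "\<bar>x - (real i + 1/2) / N\<bar> \<le> (1/2) / N" using h3 h4 h5 by simp
  then show ?thesis by simp
qed

lemma map_upt_nth: "j \<le> N \<Longrightarrow> map g [0..<Suc N] ! j = g j"
proof -
  assume j: "j \<le> N"
  have jl: "j < length [0..<Suc N]" using j by (simp del: upt_Suc)
  have "map g [0..<Suc N] ! j = g ([0..<Suc N] ! j)" by (rule nth_map[OF jl])
  moreover have "[0..<Suc N] ! j = j" using j by (simp del: upt_Suc add: nth_upt)
  ultimately show ?thesis by simp
qed

lemma map_upt_len: "length (map g [0..<Suc N]) = Suc N" by (simp del: upt_Suc)

lemma map_upt_split: "1 \<le> N \<Longrightarrow> map g [0..<Suc N] = [g 0] @ map g [1..<N] @ [g N]"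
proof -
  assume N: "1 \<le> N"
  have "[0..<Suc N] = 0 # [1..<Suc N]" by (simp add: upt_conv_Cons del: upt_Suc)
  moreover have "[1..<Suc N] = [1..<N] @ [N]" using N by simp
  ultimately show ?thesis by simp
qed

lemma vl_length: "length (vl G x w) = Suc (length w)"
  by (induction w arbitrary: x) auto

lemma mid_cell:
  assumes "j < (N::nat)"
  shows "(real j + 1/2) / real N \<in> {0..1}" "real j \<le> (real j + 1/2) / real N * real N"
    "(real j + 1/2) / real N * real N \<le> real j + 1"
proof -
  have Np: "0 < real N" using assms by simp
  have "Suc j \<le> N" using assms by simp
  then have "real (Suc j) \<le> real N" by (simp only: of_nat_le_iff)
  then have a: "real j + 1 \<le> real N" by simp
  have "(real j + 1/2) / real N \<le> 1" using a Np by (simp add: divide_le_eq_1_pos)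
  moreover have "0 \<le> (real j + 1/2) / real N" using Np by simp
  ultimately show "(real j + 1/2) / real N \<in> {0..1}" by simp
  have "(real j + 1/2) / real N * real N = real j + 1/2" using Np by simp
  then show "real j \<le> (real j + 1/2) / real N * real N" "(real j + 1/2) / real N * real N \<le> real j + 1" by simp_all
qed

lemma frac_in:
  assumes "k \<le> (N::nat)" "0 < N"
  shows "real k / real N \<in> {0..1}"
proof -
  have Np: "0 < real N" using assms by simp
  have "real k \<le> real N" using assms by simp
  then have "real k / real N \<le> 1" using Np by (simp add: divide_le_eq_1_pos)
  then show ?thesis using Np by simp
qed

lemma grid:
  assumes ch: "chain G S V" and cl: "last V = hd V" and lV: "2 \<le> length V"
    and hl: "homotopic_loops (flag_realization G S) (epath V) (\<lambda>t. dl (hd V))"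
  shows "eqv G S V [hd V]"
proof -
  let ?X = "flag_realization G S"
  let ?sq = "{0..1::real} \<times> {0..1::real}"
  from hl[unfolded homotopic_loops] obtain H where
    H1: "continuous_on ?sq H" and H2: "H \<in> ?sq \<rightarrow> ?X" and H3: "\<forall>x\<in>{0..1}. H (0, x) = epath V x"
    and H4: "\<forall>x\<in>{0..1}. H (1, x) = dl (hd V)"
    and H5: "\<forall>t\<in>{0..1}. pathfinish (H \<circ> Pair t) = pathstart (H \<circ> Pair t)"
    by blast
  have HX: "H (s, t) \<in> ?X" if "s \<in> {0..1}" "t \<in> {0..1}" for s t using H2 that by auto
  have Hper: "H (s, 1) = H (s, 0)" if "s \<in> {0..1}" for s using H5 that by (auto simp: pathstart_def pathfinish_def)
  have "\<forall>v. \<exists>U. open U \<and> U \<inter> ?sq = {x \<in> ?sq. 0 < H x v}" using coord_open[OF H1] by blast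
  then have "\<exists>A. \<forall>v. open (A v) \<and> A v \<inter> ?sq = {x \<in> ?sq. 0 < H x v}" by (rule choice)
  then obtain A where A0: "\<forall>v. open (A v) \<and> A v \<inter> ?sq = {x \<in> ?sq. 0 < H x v}" by blast
  have Aopen: "\<And>v. open (A v)" using A0 by blast
  have inA: "0 < H x v" if "x \<in> ?sq" "x \<in> A v" for x v using A0 that by blast
  have cover: "?sq \<subseteq> \<Union> (range A)"
  proof
    fix x assume x: "x \<in> ?sq"
    then obtain s t where st: "x = (s, t)" "s \<in> {0..1}" "t \<in> {0..1}" by auto
    obtain v where "v \<in> supp (H x)" using realization_supp_ne[OF HX[OF st(2,3)]] st(1) by auto
    then have "0 < H x v" using pos_supp[OF HX[OF st(2,3)]] st(1) by simp
    then have "x \<in> A v" using A0 x by blast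
    then show "x \<in> \<Union> (range A)" by blast
  qed
  have csq: "compact ?sq" by (intro compact_Times compact_Icc)
  obtain e where e: "0 < e" "\<And>x. x \<in> ?sq \<Longrightarrow> \<exists>U \<in> range A. ball x e \<subseteq> U"
    using Heine_Borel_lemma[OF csq cover] Aopen by blast
  define m where "m = length V - 1"
  have Vne: "V \<noteq> []" using lV by auto
  have m1: "1 \<le> m" and lVm: "length V = Suc m" using lV by (simp_all add: m_def)
  define K :: nat where "K = nat \<lceil>2 / e\<rceil> + 2"
  define N where "N = m * K"
  have K2: "2 \<le> K" by (simp add: K_def)
  have KN: "K \<le> N" using m1 by (simp add: N_def)
  have N2: "2 \<le> N" using K2 KN by simp
  have Np: "0 < real N" using N2 by simp
  have Ke: "2 / e < real K" unfolding K_def by linarith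
  have Ne: "1 / real N < e"
  proof -
    have "1 / e < 2 / e" using e(1) by (simp add: divide_strict_right_mono)
    moreover have "real K \<le> real N" using KN by simp
    ultimately have "1 / e < real N" using Ke by linarith
    then have "1 < real N * e" using e(1) by (simp add: divide_less_eq)
    then show ?thesis using Np by (simp add: divide_less_eq mult.commute)
  qed
  have "\<forall>ij. \<exists>v. fst ij < N \<and> snd ij < N \<longrightarrow>
          ball ((real (fst ij) + 1/2) / real N, (real (snd ij) + 1/2) / real N) e \<subseteq> A v"
  proof
    fix ij :: "nat \<times> nat"
    show "\<exists>v. fst ij < N \<and> snd ij < N \<longrightarrow>
          ball ((real (fst ij) + 1/2) / real N, (real (snd ij) + 1/2) / real N) e \<subseteq> A v"
    proof (cases "fst ij < N \<and> snd ij < N")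
      case True
      have "((real (fst ij) + 1/2) / real N, (real (snd ij) + 1/2) / real N) \<in> ?sq"
        using mid_cell(1)[of "fst ij" N] mid_cell(1)[of "snd ij" N] True by simp
      then obtain U where "U \<in> range A" "ball ((real (fst ij) + 1/2) / real N, (real (snd ij) + 1/2) / real N) e \<subseteq> U"
        using e(2) by blast
      then show ?thesis by auto
    qed auto
  qed
  then have "\<exists>W. \<forall>ij. fst ij < N \<and> snd ij < N \<longrightarrow>
          ball ((real (fst ij) + 1/2) / real N, (real (snd ij) + 1/2) / real N) e \<subseteq> A (W ij)" by (rule choice)
  then obtain W where W0: "\<forall>ij. fst ij < N \<and> snd ij < N \<longrightarrow>
          ball ((real (fst ij) + 1/2) / real N, (real (snd ij) + 1/2) / real N) e \<subseteq> A (W ij)" by blast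
  define Wf where "Wf i j = W (i, j)" for i j
  have QS: "Wf i j \<in> supp (H (s, t))"
    if ij: "i < N" "j < N" and st: "s \<in> {0..1}" "t \<in> {0..1}"
      and b: "real i \<le> s * real N" "s * real N \<le> real i + 1" "real j \<le> t * real N" "t * real N \<le> real j + 1"
    for i j s t
  proof -
    let ?c = "((real i + 1/2) / real N, (real j + 1/2) / real N)"
    have d1: "dist s ((real i + 1/2) / real N) \<le> 1 / (2 * real N)"
      using cell_bound[OF Np b(1,2)] by (simp add: dist_real_def)
    have d2: "dist t ((real j + 1/2) / real N) \<le> 1 / (2 * real N)"
      using cell_bound[OF Np b(3,4)] by (simp add: dist_real_def)
    have "dist (s, t) ?c = sqrt ((dist s ((real i + 1/2) / real N))\<^sup>2 + (dist t ((real j + 1/2) / real N))\<^sup>2)"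
      by (rule dist_Pair_Pair)
    also have "\<dots> \<le> \<bar>dist s ((real i + 1/2) / real N)\<bar> + \<bar>dist t ((real j + 1/2) / real N)\<bar>"
      by (rule sqrt_sum_squares_le_sum_abs)
    also have "\<dots> \<le> 1 / (2 * real N) + 1 / (2 * real N)" using d1 d2 by simp
    also have "\<dots> = 1 / real N" by simp
    finally have "dist (s, t) ?c < e" using Ne by simp
    then have "(s, t) \<in> ball ?c e" by (simp add: dist_commute)
    moreover have "ball ?c e \<subseteq> A (Wf i j)" using W0[rule_format, of "(i, j)"] ij by (simp add: Wf_def)
    ultimately have "(s, t) \<in> A (Wf i j)" by blast
    then have "0 < H (s, t) (Wf i j)" using inA[of "(s, t)"] st by simp
    then show ?thesis using pos_supp[OF HX[OF st]] by simp
  qed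
  define R where "R i = map (\<lambda>j. Wf i (j mod N)) [0..<Suc N]" for i
  have hdR: "hd (R i) = Wf i 0" for i unfolding R_def by (simp del: upt_Suc add: upt_conv_Cons)
  have cC: "hd V \<in> carrier G" using ch lV by (cases V) (auto simp: chain_def)
  have top: "eqv G S (R (N - 1)) [hd (R (N - 1))]"
  proof -
    have "R (N - 1) = replicate (Suc N) (hd V)"
    proof (rule nth_equalityI)
      show "length (R (N - 1)) = length (replicate (Suc N) (hd V))" unfolding R_def by (simp del: upt_Suc)
      fix j assume "j < length (R (N - 1))"
      then have j: "j \<le> N" unfolding R_def by (simp del: upt_Suc)
      let ?k = "j mod N"
      have k: "?k < N" using Np by simp
      let ?t = "(real ?k + 1/2) / real N"
      have t: "?t \<in> {0..1}" and tb: "real ?k \<le> ?t * real N" "?t * real N \<le> real ?k + 1"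
        using mid_cell[OF k] by auto
      have "Wf (N - 1) ?k \<in> supp (H (1, ?t))"
        by (rule QS[OF _ k _ t]) (use N2 tb in \<open>auto simp: of_nat_diff\<close>)
      then have "Wf (N - 1) ?k = hd V" using H4 t by simp
      moreover have "R (N - 1) ! j = Wf (N - 1) (j mod N)" unfolding R_def by (rule map_upt_nth[OF j])
      moreover have "replicate (Suc N) (hd V) ! j = hd V" using j by (simp del: replicate_Suc add: nth_replicate)
      ultimately show "R (N - 1) ! j = replicate (Suc N) (hd V) ! j" by simp
    qed
    moreover have "hd (R (N - 1)) = hd V" using calculation by simp
    ultimately show ?thesis using replicate_eqv[OF cC] by simp
  qed
  have step: "eqv G S (R i) [hd (R i)]" if i: "Suc i < N" and null: "eqv G S (R (Suc i)) [hd (R (Suc i))]" for i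
  proof -
    define M where "M j = map (\<lambda>k. Wf (if k mod N < j then Suc i else i) (k mod N)) [0..<Suc N]" for j
    have lM: "length (M j) = Suc N" for j unfolding M_def by (simp del: upt_Suc)
    have Mnth: "M j ! k = Wf (if k mod N < j then Suc i else i) (k mod N)" if "k \<le> N" for j k
      unfolding M_def using that by (rule map_upt_nth)
    have M0: "M 0 = R i" unfolding M_def R_def by simp
    have MN: "M N = R (Suc i)" unfolding M_def R_def using Np by (intro map_cong) auto
    have s0: "real (Suc i) / real N \<in> {0..1}" using frac_in[of "Suc i" N] i by simp
    have s0b: "real (Suc i) / real N * real N = real (Suc i)" using Np by simp
    have rep: "eqv G S (M j) (M (Suc j))" if j: "1 \<le> j" "j < N" for j
    proof -
      have upd: "M (Suc j) = (M j)[j := Wf (Suc i) j]"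
      proof (rule nth_equalityI)
        show "length (M (Suc j)) = length ((M j)[j := Wf (Suc i) j])" by (simp add: lM)
        fix k assume "k < length (M (Suc j))"
        then have k: "k \<le> N" by (simp add: lM)
        show "M (Suc j) ! k = (M j)[j := Wf (Suc i) j] ! k"
        proof (cases "k = j")
          case True then show ?thesis using j k lM by (simp add: Mnth nth_list_update)
        next
          case False
          have "k mod N \<noteq> j"
          proof
            assume km: "k mod N = j"
            show False
            proof (cases "k < N")
              case True then show False using km False by simp
            next
              case nt: False then have "k = N" using k by simp
              then show False using km j by simp
            qed
          qed
          then show ?thesis using False k j lM by (simp add: Mnth nth_list_update)
        qed
      qed
      let ?s = "real (Suc i) / real N"
      have jm: "M j ! (j - 1) = Wf (Suc i) (j - 1)" using j Mnth[of "j - 1" j] by simp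
      have jj: "M j ! j = Wf i j" using j Mnth[of j j] by simp
      have t1p: "real j / real N \<in> {0..1}" using frac_in[of j N] j by simp
      have t1b: "real j / real N * real N = real j" using Np by simp
      have a1: "Wf (Suc i) (j - 1) \<in> supp (H (?s, real j / real N))"
        by (rule QS[OF i _ s0 t1p]) (use j s0b t1b in \<open>simp_all add: of_nat_diff\<close>)
      have a2: "Wf i j \<in> supp (H (?s, real j / real N))"
        by (rule QS[OF _ _ s0 t1p]) (use i j s0b t1b in simp_all)
      have a3: "Wf (Suc i) j \<in> supp (H (?s, real j / real N))"
        by (rule QS[OF i _ s0 t1p]) (use j s0b t1b in simp_all)
      have T1: "tri G S (M j ! (j - 1)) (M j ! j) (Wf (Suc i) j)"
        unfolding jm jj by (rule supp_tri[OF HX[OF s0 t1p] a1 a2 a3])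
      have t2p: "real (Suc j) / real N \<in> {0..1}" using frac_in[of "Suc j" N] j by simp
      have t2b: "real (Suc j) / real N * real N = real (Suc j)" using Np by simp
      have b1: "Wf i j \<in> supp (H (?s, real (Suc j) / real N))"
        by (rule QS[OF _ _ s0 t2p]) (use i j s0b t2b in simp_all)
      have b2: "Wf (Suc i) j \<in> supp (H (?s, real (Suc j) / real N))"
        by (rule QS[OF i _ s0 t2p]) (use j s0b t2b in simp_all)
      have b3: "M j ! Suc j \<in> supp (H (?s, real (Suc j) / real N))"
      proof (cases "Suc j < N")
        case True
        have "M j ! Suc j = Wf i (Suc j)" using True Mnth[of "Suc j" j] by simp
        moreover have "Wf i (Suc j) \<in> supp (H (?s, real (Suc j) / real N))"
          by (rule QS[OF _ True s0 t2p]) (use i s0b t2b in simp_all)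
        ultimately show ?thesis by simp
      next
        case False
        then have sj: "Suc j = N" using j by simp
        have "M j ! Suc j = Wf (Suc i) 0" using sj j Mnth[of "Suc j" j] by simp
        moreover have "Wf (Suc i) 0 \<in> supp (H (?s, 0))"
          by (rule QS[OF i _ s0]) (use Np s0b in simp_all)
        moreover have "real (Suc j) / real N = 1" using sj Np by simp
        ultimately show ?thesis using Hper[OF s0] by simp
      qed
      have T2: "tri G S (M j ! j) (Wf (Suc i) j) (M j ! Suc j)"
        unfolding jj by (rule supp_tri[OF HX[OF s0 t2p] b1 b2 b3])
      have "eqv G S (M j) ((M j)[j := Wf (Suc i) j])"
        by (rule replace_eqv) (use j lM T1 T2 in simp_all)
      then show ?thesis using upd by simp
    qed
    have chainM: "eqv G S (M 1) (M (Suc d))" if "Suc d \<le> N" for d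
      using that
    proof (induction d)
      case (Suc d)
      have "eqv G S (M 1) (M (Suc d))" using Suc by simp
      moreover have "eqv G S (M (Suc d)) (M (Suc (Suc d)))" by (rule rep) (use Suc in simp_all)
      ultimately show ?case by (rule eqv_trans)
    qed simp
    have M1N: "eqv G S (M 1) (M N)" using chainM[of "N - 1"] N2 by simp
    let ?a = "Wf i 0" and ?b = "Wf (Suc i) 0"
    let ?mid = "map (\<lambda>k. Wf i k) [1..<N]"
    have N1: "1 \<le> N" using N2 by simp
    have M1s: "M 1 = [?b] @ ?mid @ [?b]"
    proof -
      have "M 1 = [(\<lambda>k. Wf (if k mod N < 1 then Suc i else i) (k mod N)) 0] @
          map (\<lambda>k. Wf (if k mod N < 1 then Suc i else i) (k mod N)) [1..<N] @
          [(\<lambda>k. Wf (if k mod N < 1 then Suc i else i) (k mod N)) N]"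
        unfolding M_def by (rule map_upt_split[OF N1])
      then have "M 1 = [Wf (Suc i) 0] @ map (\<lambda>k. Wf (if k mod N < 1 then Suc i else i) (k mod N)) [1..<N] @ [Wf (Suc i) 0]"
        by simp
      moreover have "map (\<lambda>k. Wf (if k mod N < 1 then Suc i else i) (k mod N)) [1..<N] = ?mid"
        by (intro map_cong) auto
      ultimately show ?thesis by simp
    qed
    have M0s: "M 0 = [?a] @ ?mid @ [?a]"
    proof -
      have "M 0 = [(\<lambda>k. Wf (if k mod N < 0 then Suc i else i) (k mod N)) 0] @
          map (\<lambda>k. Wf (if k mod N < 0 then Suc i else i) (k mod N)) [1..<N] @
          [(\<lambda>k. Wf (if k mod N < 0 then Suc i else i) (k mod N)) N]"
        unfolding M_def by (rule map_upt_split[OF N1])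
      then have "M 0 = [Wf i 0] @ map (\<lambda>k. Wf i (k mod N)) [1..<N] @ [Wf i 0]"
        by simp
      moreover have "map (\<lambda>k. Wf i (k mod N)) [1..<N] = ?mid" by (intro map_cong) auto
      ultimately show ?thesis by simp
    qed
    have midne: "?mid \<noteq> []" using N2 by simp
    have lastmid: "last ?mid = Wf i (N - 1)"
    proof -
      have NN: "Suc (N - 1) = N" using N2 by simp
      have "[1..<Suc (N - 1)] = [1..<N - 1] @ [N - 1]" using N2 by (simp only: upt_Suc) simp
      then have "[1..<N] = [1..<N - 1] @ [N - 1]" using NN by simp
      then show ?thesis by simp
    qed
    have hdmid: "hd ?mid = Wf i 1" using N2 by (simp add: upt_conv_Cons)
    have z0: "(0::real) \<in> {0..1}" "(1::real) \<in> {0..1}" by auto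
    have c1: "?b \<in> supp (H (real (Suc i) / real N, 0))" by (rule QS[OF i _ s0 z0(1)]) (use Np s0b in simp_all)
    have c2: "?a \<in> supp (H (real (Suc i) / real N, 0))" by (rule QS[OF _ _ s0 z0(1)]) (use i Np s0b in simp_all)
    have c3: "Wf i (N - 1) \<in> supp (H (real (Suc i) / real N, 1))"
      by (rule QS[OF _ _ s0 z0(2)]) (use i N2 Np s0b in \<open>simp_all add: of_nat_diff\<close>)
    have TT1: "tri G S (last ?mid) ?b ?a"
      unfolding lastmid using supp_tri[OF HX[OF s0 z0(1)] _ c1 c2] c3 Hper[OF s0] by simp
    have t1p: "1 / real N \<in> {0..1}" using frac_in[of 1 N] N2 by simp
    have t1b: "1 / real N * real N = 1" using Np by simp
    have d1: "?b \<in> supp (H (real (Suc i) / real N, 1 / real N))"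
      by (rule QS[OF i _ s0 t1p]) (use Np s0b t1b in simp_all)
    have d2: "?a \<in> supp (H (real (Suc i) / real N, 1 / real N))"
      by (rule QS[OF _ _ s0 t1p]) (use i Np s0b t1b in simp_all)
    have d3: "Wf i 1 \<in> supp (H (real (Suc i) / real N, 1 / real N))"
      by (rule QS[OF _ _ s0 t1p]) (use i N2 s0b t1b in simp_all)
    have TT2: "tri G S ?b ?a (hd ?mid)" unfolding hdmid by (rule supp_tri[OF HX[OF s0 t1p] d1 d2 d3])
    have hM1: "hd (M 1) = ?b" using M1s by simp
    have hMN: "hd (M N) = ?b" using MN hdR by simp
    have "eqv G S (M 1) [?b]" using eqv_trans[OF M1N] null MN hMN by simp
    then have "eqv G S ([?b] @ ?mid @ [?b]) [?b]" using M1s by simp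
    then have "eqv G S ([?a] @ ?mid @ [?a]) [?a]" by (rule cyc_eqv[OF _ midne TT1 TT2])
    then show ?thesis using M0s M0 hdR by simp
  qed
  have down: "eqv G S (R (N - 1 - d)) [hd (R (N - 1 - d))]" if "d < N" for d
    using that
  proof (induction d)
    case 0 then show ?case using top by simp
  next
    case (Suc d)
    have "Suc (N - 1 - Suc d) = N - 1 - d" using Suc(2) by simp
    then show ?case using step[of "N - 1 - Suc d"] Suc by simp
  qed
  have null0: "eqv G S (R 0) [hd (R 0)]" using down[of "N - 1"] N2 by simp
  define Xl where "Xl = map (Wf 0) [0..<N]"
  have z0: "(0::real) \<in> {0..1}" by simp
  have Wf00: "Wf 0 0 = V ! 0"
  proof -
    have "Wf 0 0 \<in> supp (H (0, 0))" by (rule QS[OF _ _ z0 z0]) (use N2 in simp_all)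
    moreover have "H (0, 0) = dl (hd V)" using H3 epath_start[of V 0] ch by (simp add: chain_def)
    ultimately show ?thesis using hd_conv_nth[OF Vne] by simp
  qed
  have R0: "R 0 = Xl @ [V ! m]"
  proof -
    have "R 0 = map (\<lambda>j. Wf 0 (j mod N)) [0..<N] @ [Wf 0 0]" unfolding R_def by simp
    moreover have "map (\<lambda>j. Wf 0 (j mod N)) [0..<N] = Xl" unfolding Xl_def by (intro map_cong) auto
    moreover have "V ! m = V ! 0" using cl hd_conv_nth[OF Vne] last_conv_nth[OF Vne] by (simp add: m_def)
    ultimately show ?thesis using Wf00 by simp
  qed
  have lX: "length Xl = m * K" by (simp add: Xl_def N_def)
  have condA: "\<forall>j < m * K. Xl!j = V!(j div K) \<or> Xl!j = V!(Suc (j div K))"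
  proof (intro allI impI)
    fix j assume j: "j < m * K"
    let ?t = "(real j + 1/2) / real N"
    have jN: "j < N" using j by (simp add: N_def)
    have t: "?t \<in> {0..1}" and tb: "real j \<le> ?t * real N" "?t * real N \<le> real j + 1"
      using mid_cell[OF jN] by auto
    have "Wf 0 j \<in> supp (H (0, ?t))" by (rule QS[OF _ jN z0 t _ _ tb]) (use N2 in simp_all)
    then have s1: "Wf 0 j \<in> supp (epath V ?t)" using H3 t by simp
    let ?k = "j div K"
    have Kp: "0 < K" using K2 by simp
    have km: "?k < m" using j Kp by (simp add: div_less_iff_less_mult)
    have mpos: "0 < real m" using m1 by simp
    have Kpos: "0 < real K" using Kp by simp
    have tm: "?t * real m = (real j + 1/2) / real K" using mpos Kpos by (simp add: N_def field_simps)
    have kK1: "?k * K \<le> j" by (simp add: div_times_less_eq_dividend)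
    have mK: "j mod K < K" using Kp by simp
    have e1: "j div K * K + j mod K = j" by simp
    have e2: "Suc ?k * K = K + ?k * K" by simp
    have kK2: "Suc j \<le> Suc ?k * K" unfolding e2 using e1 mK by linarith
    have r1: "real ?k * real K \<le> real j"
    proof -
      have "real (?k * K) \<le> real j" using kK1 by (simp only: of_nat_le_iff)
      then show ?thesis by simp
    qed
    have r2: "real j + 1 \<le> (real ?k + 1) * real K"
    proof -
      have "real (Suc j) \<le> real (Suc ?k * K)" using kK2 by (simp only: of_nat_le_iff)
      then show ?thesis by (simp add: algebra_simps)
    qed
    have q1: "real ?k \<le> ?t * real (length V - 1)"
    proof -
      have "real ?k * real K \<le> real j + 1/2" using r1 by simp
      then have "real ?k \<le> (real j + 1/2) / real K" using Kp by (simp add: le_divide_eq)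
      then show ?thesis using tm by (simp add: m_def)
    qed
    have q2: "?t * real (length V - 1) \<le> real ?k + 1"
    proof -
      have "real j + 1/2 \<le> (real ?k + 1) * real K" using r2 by simp
      then have "(real j + 1/2) / real K \<le> real ?k + 1" using Kp by (simp add: divide_le_eq)
      then show ?thesis using tm by (simp add: m_def)
    qed
    obtain s where es: "epath V ?t = seg (V ! ?k) (V ! Suc ?k) s"
      using epath_seg[of ?k V ?t] km q1 q2 by (auto simp: m_def)
    have "supp (epath V ?t) \<subseteq> {V ! ?k, V ! Suc ?k}" unfolding es by (rule supp_seg)
    then have "Wf 0 j \<in> {V ! ?k, V ! Suc ?k}" using s1 by blast
    then show "Xl!j = V!(j div K) \<or> Xl!j = V!(Suc (j div K))" using jN by (simp add: Xl_def)
  qed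
  have condB: "\<forall>k < m. Xl!(k * K) = V!k"
  proof (intro allI impI)
    fix k assume k: "k < m"
    let ?t = "real k / real m"
    have mp: "0 < real m" using m1 by simp
    have kKN: "k * K < N" using k K2 by (simp add: N_def)
    have t: "?t \<in> {0..1}" using frac_in[of k m] k m1 by simp
    have tN: "?t * real N = real (k * K)" using mp by (simp add: N_def)
    have "Wf 0 (k * K) \<in> supp (H (0, ?t))" by (rule QS[OF _ kKN z0 t]) (use N2 tN in simp_all)
    moreover have "H (0, ?t) = dl (V ! k)"
    proof -
      have "epath V ?t = dl (V ! k)" by (rule epath_grid) (use ch k mp lVm in \<open>simp_all add: chain_def\<close>)
      then show ?thesis using H3 t by simp
    qed
    ultimately have "Wf 0 (k * K) = V ! k" by simp
    then show "Xl!(k * K) = V!k" using kKN by (simp add: Xl_def)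
  qed
  have bot: "eqv G S (Xl @ [V ! m]) V" by (rule blocks_eqv[OF lVm ch lX _ condA condB]) (use K2 in simp)
  have "hd (R 0) = hd V" using hdR Wf00 hd_conv_nth[OF Vne] by simp
  then have "eqv G S (R 0) [hd V]" using null0 by simp
  moreover have "eqv G S (R 0) V" using bot R0 by simp
  ultimately show ?thesis using eqv_trans[OF eqv_sym] by blast
qed


theorem mainTheorem1:
  fixes G :: "('a, 'b) monoid_scheme" and S :: "'a set"
  assumes "group G"
    and "finite S"
    and "S \<subseteq> carrier G"
    and "generate G S = carrier G"
    and "\<forall>s\<in>S. inv\<^bsub>G\<^esub> s \<notin> S"
  shows "simply_connected (flag_realization G S) \<longleftrightarrow>
         is_presentation G S (triangle_relators G S)"
proof -
  have fc: "fctx G S" unfolding fctx_def fctx_axioms_def using assms(1,3,5) by blast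
  interpret fctx G S by (rule fc)
  let ?X = "flag_realization G S"
  show ?thesis
  proof
    assume sc: "simply_connected ?X"
    show "is_presentation G S (triangle_relators G S)" unfolding is_presentation_def
    proof (intro conjI ballI allI impI iffI)
      fix g assume "g \<in> carrier G"
      then show "\<exists>w. word_over S w \<and> word_eval G w = g" using gen_word assms(4) by simp
    next
      fix w assume w: "word_over S w" and e: "word_eval G w = \<one>\<^bsub>G\<^esub>"
      show "in_normal_closure S (triangle_relators G S) w"
      proof (cases "w = []")
        case True then show ?thesis using in_nc_Nil by simp
      next
        case False
        let ?V = "vl G \<one>\<^bsub>G\<^esub> w"
        have chV: "chain G S ?V" by (rule chain_vl[OF one_closed w])
        have lastV: "last ?V = hd ?V" using vl_last[OF one_closed w] e by simp
        have lenV: "2 \<le> length ?V" using False by (cases w) (simp_all add: vl_length)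
        have Vne: "?V \<noteq> []" by simp
        have l1: "path (epath ?V)" "pathfinish (epath ?V) = pathstart (epath ?V)" "path_image (epath ?V) \<subseteq> ?X"
          using path_epath epath_image[OF chV] lastV epath_pathstart[OF Vne] epath_pathfinish[OF Vne] by auto
        have cp: "path (\<lambda>t::real. dl (hd ?V))" unfolding path_def by (rule continuous_on_const)
        have l2: "path (\<lambda>t::real. dl (hd ?V))" "pathfinish (\<lambda>t::real. dl (hd ?V)) = pathstart (\<lambda>t::real. dl (hd ?V))"
          "path_image (\<lambda>t::real. dl (hd ?V)) \<subseteq> ?X"
          using cp dl_in[OF one_closed] by (auto simp: pathstart_def pathfinish_def path_image_def)
        have "homotopic_loops ?X (epath ?V) (\<lambda>t. dl (hd ?V))"
          using sc l1 l2 unfolding simply_connected_def by blast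
        then have "eqv G S ?V [hd ?V]" by (rule grid[OF chV lastV lenV])
        then have "eqv G S (vl G \<one>\<^bsub>G\<^esub> w) [\<one>\<^bsub>G\<^esub>]" by simp
        then show ?thesis by (rule A_final[OF w])
      qed
    next
      fix w assume "word_over S w" "in_normal_closure S (triangle_relators G S) w"
      then show "word_eval G w = \<one>\<^bsub>G\<^esub>" by (rule nc_eval)
    qed
  next
    assume pres: "is_presentation G S (triangle_relators G S)"
    show "simply_connected ?X" unfolding simply_connected_def
    proof (intro allI impI, elim conjE)
      fix p q
      assume p: "path p" "pathfinish p = pathstart p" "path_image p \<subseteq> ?X"
        and q: "path q" "pathfinish q = pathstart q" "path_image q \<subseteq> ?X"
      have hp: "homotopic_loops ?X p (\<lambda>t. dl \<one>\<^bsub>G\<^esub>)" by (rule loop_null[OF assms(4) pres p(1) p(3) p(2)])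
      have hq: "homotopic_loops ?X q (\<lambda>t. dl \<one>\<^bsub>G\<^esub>)" by (rule loop_null[OF assms(4) pres q(1) q(3) q(2)])
      show "homotopic_loops ?X p q" by (rule homotopic_loops_trans[OF hp homotopic_loops_sym[OF hq]])
    qed
  qed
qed


end
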